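(* Let $X$ be a topologically complete space and $\mathcal A$ a family of closed, locally finite, normal covers of $X$ satisfying conditions (I) and (II), and let $N_\infty=F_\infty$, $\pi:N_\infty\to X$ and $p:X\to N_\infty$ be as in the context. Then: (1) $\pi$ is a perfect map (continuous, closed, with compact fibers $\pi^{-1}(x)$); (2a) $\pi\circ p=\mathrm{id}_X$; (2b) there exists a homotopy $H:N_\infty\times[0,1]\to N_\infty$ with $H_0=\mathrm{id}_{N_\infty}$, $H_1=p\circ\pi$ and $\pi\circ H=\pi\circ\mathrm{proj}$, where $\mathrm{proj}:N_\infty\times[0,1]\to N_\infty$ is the projection. In particular each fiber of $\pi$ is contractible.
   Context: A topologically complete space is a Tychonoff space complete with respect to its finest uniformity. A closed, locally finite, normal cover $\alpha$ of $X$ is a locally finite cover by closed sets admitting a partition of unity $\{\phi_{\alpha,V}:V\in\alpha\}$ with $\mathrm{cl}(\phi_{\alpha,V}^{-1}((0,1]))\subset\mathrm{int}(V)$, $\sum_V\phi_{\alpha,V}=1$; fix such a partition of unity for each $\alpha\in\mathcal A$. $\mathrm{star}_\alpha(x)=\{V\in\alpha:x\in V\}$. Conditions: (I) for each open $U\subset X$ and $x\in U$ there is $\alpha\in\mathcal A$ with $\bigcup\mathrm{star}_\alpha(x)\subset U$; (II) if $f(\alpha)\in\alpha$ is chosen for each $\alpha\in\mathcal A$ and $\{f(\alpha)\}$ has the finite intersection property, then $\bigcap_\alpha f(\alpha)\neq\emptyset$. Construction: $\Lambda$ is the set of finite subsets of $\mathcal A$ directed by inclusion. For $\lambda\in\Lambda$,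 $N^{(0)}_\lambda$ is the set of functions $v$ on $\lambda$ with $v(\alpha)\in\alpha$ for all $\alpha\in\lambda$ and $\wedge v:=\bigcap_{\alpha\in\lambda}v(\alpha)\neq\emptyset$ (empty intersection meaning $X$). $F_\lambda$ is the simplicial complex (weak topology) with vertex set $N^{(0)}_\lambda$ in which $\{v_1,\dots,v_k\}$ spans a simplex iff $\wedge v_i\cap\wedge v_j\neq\emptyset$ for all $i,j$; $N_\lambda$ is its subcomplex with the same vertices in which $\{v_1,\dots,v_k\}$ spans a simplex iff $\bigcap_i\wedge v_i\neq\emptyset$. For $\lambda\subset\mu$, $\pi^\mu_\lambda$ is the simplicial map sending a vertex $v$ to $v|_\lambda$. $F_\infty=\varprojlim F_\lambda$ and $N_\infty=\varprojlim N_\lambda$ (they coincide), with projections $\pi_\lambda$ and $z(\lambda)=\pi_\lambda(z)$. For $a\in F_\lambda$, $\sigma_\lambda(a)$ is the unique simplex containing $a$ in its interior, and $\wedge a=\bigcap\{\wedge v:v\text{ a vertex of }\sigma_\lambda(a)\}$. For each $z\in N_\infty$ the set $\bigcap_\lambda\wedge z(\lambda)$ is a single point, and $\pi(z)$ is defined as that point. For $v\in N^{(0)}_\lambda$ let $\phi_v=\prod_{\alpha\in\lambda}\phi_{\alpha,v(\alpha)}$; $p_\lambda:X\to N_\lambda$ is the canonical map sending $x$ to the point with barycentric coordinates $(\phi_v(x))_{v\in N^{(0)}_\lambda}$. These satisfy $p_\lambda=\pi^\mu_\lambda\circ p_\mu$ for $\lambda\subset\mu$, and $p:X\to N_\infty$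 is the induced map with $\pi_\lambda\circ p=p_\lambda$. *)

theory Defs
  imports "HOL-Analysis.Analysis"
begin

definition tychonoff_space :: "'a topology \<Rightarrow> bool" where
  "tychonoff_space X \<longleftrightarrow> completely_regular_space X \<and> t1_space X"

definition uniformity_on :: "'a topology \<Rightarrow> ('a \<times> 'a) set set \<Rightarrow> bool" where
  "uniformity_on X U \<longleftrightarrow>
     U \<noteq> {} \<and>
     (\<forall>E\<in>U. Id_on (topspace X) \<subseteq> E \<and> E \<subseteq> topspace X \<times> topspace X) \<and>
     (\<forall>E\<in>U. \<forall>D. E \<subseteq> D \<and> D \<subseteq> topspace X \<times> topspace X \<longrightarrow> D \<in> U) \<and>
     (\<forall>E\<in>U. \<forall>D\<in>U. E \<inter> D \<in> U) \<and>
     (\<forall>E\<in>U. converse E \<in> U) \<and>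
     (\<forall>E\<in>U. \<exists>D\<in>U. D O D \<subseteq> E)"

definition compatible_uniformity :: "'a topology \<Rightarrow> ('a \<times> 'a) set set \<Rightarrow> bool" where
  "compatible_uniformity X U \<longleftrightarrow> uniformity_on X U \<and>
     (\<forall>S. openin X S \<longleftrightarrow> S \<subseteq> topspace X \<and> (\<forall>x\<in>S. \<exists>E\<in>U. {y. (x, y) \<in> E} \<subseteq> S))"

definition finest_uniformity :: "'a topology \<Rightarrow> ('a \<times> 'a) set set \<Rightarrow> bool" where
  "finest_uniformity X U \<longleftrightarrow> compatible_uniformity X U \<and>
     (\<forall>U'. compatible_uniformity X U' \<longrightarrow> U' \<subseteq> U)"

definition uniformly_complete :: "'a topology \<Rightarrow> ('a \<times> 'a) set set \<Rightarrow> bool" where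
  "uniformly_complete X U \<longleftrightarrow>
     (\<forall>F::'a filter. F \<noteq> bot \<and> eventually (\<lambda>x. x \<in> topspace X) F \<and>
        (\<forall>E\<in>U. \<exists>A. eventually (\<lambda>x. x \<in> A) F \<and> A \<times> A \<subseteq> E)
        \<longrightarrow> (\<exists>x\<in>topspace X. \<forall>S. openin X S \<and> x \<in> S \<longrightarrow> eventually (\<lambda>y. y \<in> S) F))"

definition topologically_complete :: "'a topology \<Rightarrow> bool" where
  "topologically_complete X \<longleftrightarrow> tychonoff_space X \<and>
     (\<exists>U. finest_uniformity X U \<and> uniformly_complete X U)"

text \<open>\<open>\<phi> V\<close> is the function \<open>\<phi>\<^sub>\<alpha>\<^sub>,\<^sub>V\<close> of the fixed partition of unity of \<open>\<alpha>\<close>.\<close>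
definition normal_cover :: "'a topology \<Rightarrow> 'a set set \<Rightarrow> ('a set \<Rightarrow> 'a \<Rightarrow> real) \<Rightarrow> bool" where
  "normal_cover X \<alpha> \<phi> \<longleftrightarrow>
     (\<forall>V\<in>\<alpha>. closedin X V) \<and> \<Union>\<alpha> = topspace X \<and> locally_finite_in X \<alpha> \<and>
     (\<forall>V\<in>\<alpha>. continuous_map X euclideanreal (\<phi> V) \<and> (\<forall>x\<in>topspace X. 0 \<le> \<phi> V x) \<and>
        X closure_of {x \<in> topspace X. \<phi> V x > 0} \<subseteq> X interior_of V) \<and>
     (\<forall>x\<in>topspace X. (\<Sum>V\<in>{V\<in>\<alpha>. \<phi> V x \<noteq> 0}. \<phi> V x) = 1)"

text \<open>Points of a simplicial complex are given by barycentric coordinates; \<open>Simp\<close> is the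
  predicate "spans a simplex" on finite nonempty vertex sets.\<close>
definition cplx_points :: "('v set \<Rightarrow> bool) \<Rightarrow> ('v \<Rightarrow> real) set" where
  "cplx_points Simp = {t. (\<forall>v. 0 \<le> t v) \<and> Simp {v. t v \<noteq> 0} \<and> sum t {v. t v \<noteq> 0} = 1}"

definition closed_simplex :: "'v set \<Rightarrow> ('v \<Rightarrow> real) set" where
  "closed_simplex S = {t. (\<forall>v. 0 \<le> t v) \<and> (\<forall>v. v \<notin> S \<longrightarrow> t v = 0) \<and> sum t S = 1}"

definition weak_cplx_topology :: "('v set \<Rightarrow> bool) \<Rightarrow> ('v \<Rightarrow> real) topology" where
  "weak_cplx_topology Simp = topology (\<lambda>U. U \<subseteq> cplx_points Simp \<and>
     (\<forall>S. Simp S \<longrightarrow> openin (subtopology (powertop_real UNIV) (closed_simplex S)) (U \<inter> closed_simplex S)))"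

type_synonym 'a vert = "'a set set \<Rightarrow> 'a set"
type_synonym 'a pt = "'a vert \<Rightarrow> real"

definition Lambda :: "'a set set set \<Rightarrow> 'a set set set set" where
  "Lambda \<A> = {L. finite L \<and> L \<subseteq> \<A>}"

definition wedge :: "'a topology \<Rightarrow> 'a set set set \<Rightarrow> 'a vert \<Rightarrow> 'a set" where
  "wedge X L v = topspace X \<inter> \<Inter> (v ` L)"

definition Nverts :: "'a topology \<Rightarrow> 'a set set set \<Rightarrow> 'a vert set" where
  "Nverts X L = {v \<in> PiE L (\<lambda>\<alpha>. \<alpha>). wedge X L v \<noteq> {}}"

definition NSimp :: "'a topology \<Rightarrow> 'a set set set \<Rightarrow> 'a vert set \<Rightarrow> bool" where
  "NSimp X L S \<longleftrightarrow> finite S \<and> S \<noteq> {} \<and> S \<subseteq> Nverts X L \<and>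
     topspace X \<inter> \<Inter> (wedge X L ` S) \<noteq> {}"

definition Ncplx :: "'a topology \<Rightarrow> 'a set set set \<Rightarrow> 'a pt topology" where
  "Ncplx X L = weak_cplx_topology (NSimp X L)"

definition wedge_pt :: "'a topology \<Rightarrow> 'a set set set \<Rightarrow> 'a pt \<Rightarrow> 'a set" where
  "wedge_pt X L a = topspace X \<inter> \<Inter> {wedge X L v | v. a v \<noteq> 0}"

text \<open>The simplicial map \<open>\<pi>\<^sup>M\<^sub>L\<close> (v \<mapsto> v restricted to L) on points.\<close>
definition proj_pt :: "'a set set set \<Rightarrow> 'a pt \<Rightarrow> 'a pt" where
  "proj_pt L a = (\<lambda>w. sum a {v. a v \<noteq> 0 \<and> restrict v L = w})"

definition Ninf_set :: "'a topology \<Rightarrow> 'a set set set \<Rightarrow> ('a set set set \<Rightarrow> 'a pt) set" where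
  "Ninf_set X \<A> = {z \<in> PiE (Lambda \<A>) (\<lambda>L. topspace (Ncplx X L)).
      \<forall>L\<in>Lambda \<A>. \<forall>M\<in>Lambda \<A>. L \<subseteq> M \<longrightarrow> proj_pt L (z M) = z L}"

definition Ninf :: "'a topology \<Rightarrow> 'a set set set \<Rightarrow> ('a set set set \<Rightarrow> 'a pt) topology" where
  "Ninf X \<A> = subtopology (product_topology (\<lambda>L. Ncplx X L) (Lambda \<A>)) (Ninf_set X \<A>)"

definition piX :: "'a topology \<Rightarrow> 'a set set set \<Rightarrow> ('a set set set \<Rightarrow> 'a pt) \<Rightarrow> 'a" where
  "piX X \<A> z = (THE x. x \<in> topspace X \<and> (\<forall>L\<in>Lambda \<A>. x \<in> wedge_pt X L (z L)))"

definition p_lam :: "'a topology \<Rightarrow> ('a set set \<Rightarrow> 'a set \<Rightarrow> 'a \<Rightarrow> real) \<Rightarrow> 'a set set set \<Rightarrow> 'a \<Rightarrow> 'a pt" where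
  "p_lam X \<phi> L x = (\<lambda>v. if v \<in> Nverts X L then (\<Prod>\<alpha>\<in>L. \<phi> \<alpha> (v \<alpha>) x) else 0)"

definition p_inf :: "'a topology \<Rightarrow> 'a set set set \<Rightarrow> ('a set set \<Rightarrow> 'a set \<Rightarrow> 'a \<Rightarrow> real) \<Rightarrow> 'a \<Rightarrow> ('a set set set \<Rightarrow> 'a pt)" where
  "p_inf X \<A> \<phi> x = restrict (\<lambda>L. p_lam X \<phi> L x) (Lambda \<A>)"

end

theory Submission
  imports Defs
begin

lemma istopology_weak:
  "istopology (\<lambda>U. U \<subseteq> cplx_points Simp \<and>
     (\<forall>S. Simp S \<longrightarrow> openin (subtopology (powertop_real UNIV) (closed_simplex S)) (U \<inter> closed_simplex S)))"
  unfolding istopology_def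
proof (rule conjI; intro allI impI)
  fix S T :: "('a \<Rightarrow> real) set"
  assume S: "S \<subseteq> cplx_points Simp \<and> (\<forall>R. Simp R \<longrightarrow> openin (subtopology (powertop_real UNIV) (closed_simplex R)) (S \<inter> closed_simplex R))"
    and T: "T \<subseteq> cplx_points Simp \<and> (\<forall>R. Simp R \<longrightarrow> openin (subtopology (powertop_real UNIV) (closed_simplex R)) (T \<inter> closed_simplex R))"
  show "S \<inter> T \<subseteq> cplx_points Simp \<and> (\<forall>R. Simp R \<longrightarrow> openin (subtopology (powertop_real UNIV) (closed_simplex R)) (S \<inter> T \<inter> closed_simplex R))"
  proof (intro conjI allI impI)
    show "S \<inter> T \<subseteq> cplx_points Simp" using S by auto
    fix R assume "Simp R"
    have o1: "openin (subtopology (powertop_real UNIV) (closed_simplex R)) (S \<inter> closed_simplex R)"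
      using S \<open>Simp R\<close> by blast
    have o2: "openin (subtopology (powertop_real UNIV) (closed_simplex R)) (T \<inter> closed_simplex R)"
      using T \<open>Simp R\<close> by blast
    have "openin (subtopology (powertop_real UNIV) (closed_simplex R)) ((S \<inter> closed_simplex R) \<inter> (T \<inter> closed_simplex R))"
      using openin_Int[OF o1 o2] .
    moreover have "(S \<inter> closed_simplex R) \<inter> (T \<inter> closed_simplex R) = S \<inter> T \<inter> closed_simplex R" by auto
    ultimately show "openin (subtopology (powertop_real UNIV) (closed_simplex R)) (S \<inter> T \<inter> closed_simplex R)" by simp
  qed
next
  fix K :: "('a \<Rightarrow> real) set set"
  assume K: "\<forall>S\<in>K. S \<subseteq> cplx_points Simp \<and> (\<forall>R. Simp R \<longrightarrow> openin (subtopology (powertop_real UNIV) (closed_simplex R)) (S \<inter> closed_simplex R))"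
  show "\<Union>K \<subseteq> cplx_points Simp \<and> (\<forall>R. Simp R \<longrightarrow> openin (subtopology (powertop_real UNIV) (closed_simplex R)) (\<Union>K \<inter> closed_simplex R))"
  proof (intro conjI allI impI)
    show "\<Union>K \<subseteq> cplx_points Simp" using K by auto
    fix R assume "Simp R"
    then have "openin (subtopology (powertop_real UNIV) (closed_simplex R)) (\<Union>((\<lambda>S. S \<inter> closed_simplex R) ` K))"
      using K \<open>Simp R\<close> by (intro openin_Union) auto
    moreover have "\<Union>((\<lambda>S. S \<inter> closed_simplex R) ` K) = \<Union>K \<inter> closed_simplex R" by auto
    ultimately show "openin (subtopology (powertop_real UNIV) (closed_simplex R)) (\<Union>K \<inter> closed_simplex R)" by simp
  qed
qed

lemma openin_weak:
  "openin (weak_cplx_topology Simp) U \<longleftrightarrow> U \<subseteq> cplx_points Simp \<and>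
     (\<forall>S. Simp S \<longrightarrow> openin (subtopology (powertop_real UNIV) (closed_simplex S)) (U \<inter> closed_simplex S))"
  unfolding weak_cplx_topology_def topology_inverse'[OF istopology_weak] by simp

lemma topspace_powertop [simp]: "topspace (powertop_real UNIV) = UNIV"
  by (auto simp: PiE_iff)

lemma NSimp_subset:
  assumes "NSimp X L S" "T \<subseteq> S" "T \<noteq> {}"
  shows "NSimp X L T"
proof -
  from assms(1) obtain x where x: "x \<in> topspace X" "\<forall>v\<in>S. x \<in> wedge X L v"
    unfolding NSimp_def by blast
  have "x \<in> topspace X \<inter> \<Inter>(wedge X L ` T)" using x assms(2) by blast
  then show ?thesis using assms unfolding NSimp_def by (auto intro: finite_subset)
qed

lemma NSimp_finite: "NSimp X L S \<Longrightarrow> finite S"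
  by (simp add: NSimp_def)

lemma closed_simplex_sub:
  assumes "NSimp X L S"
  shows "closed_simplex S \<subseteq> cplx_points (NSimp X L)"
proof
  fix t assume t: "t \<in> closed_simplex S"
  have fin: "finite S" using assms by (simp add: NSimp_def)
  have sub: "{v. t v \<noteq> 0} \<subseteq> S" using t by (auto simp: closed_simplex_def)
  have "sum t {v. t v \<noteq> 0} = sum t S"
    using fin sub by (intro sum.mono_neutral_left) auto
  then have s1: "sum t {v. t v \<noteq> 0} = 1" using t by (simp add: closed_simplex_def)
  have ne: "{v. t v \<noteq> 0} \<noteq> {}"
  proof
    assume "{v. t v \<noteq> 0} = {}"
    then have "sum t {v. t v \<noteq> 0} = 0" by (simp only: sum.empty)
    with s1 show False by simp
  qed
  show "t \<in> cplx_points (NSimp X L)"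
    using t s1 NSimp_subset[OF assms sub ne] by (simp add: cplx_points_def closed_simplex_def)
qed

lemma openin_Ncplx:
  "openin (Ncplx X L) U \<longleftrightarrow> U \<subseteq> cplx_points (NSimp X L) \<and>
     (\<forall>S. NSimp X L S \<longrightarrow> openin (subtopology (powertop_real UNIV) (closed_simplex S)) (U \<inter> closed_simplex S))"
  by (simp add: Ncplx_def openin_weak)

lemma topspace_Ncplx: "topspace (Ncplx X L) = cplx_points (NSimp X L)"
proof -
  have "openin (Ncplx X L) (cplx_points (NSimp X L))"
    unfolding openin_Ncplx
  proof (intro conjI allI impI subset_refl)
    fix S assume S: "NSimp X L S"
    have "cplx_points (NSimp X L) \<inter> closed_simplex S = topspace (subtopology (powertop_real UNIV) (closed_simplex S))"
      using closed_simplex_sub[OF S] by auto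
    then show "openin (subtopology (powertop_real UNIV) (closed_simplex S)) (cplx_points (NSimp X L) \<inter> closed_simplex S)"
      by (metis openin_topspace)
  qed
  moreover have "\<And>U. openin (Ncplx X L) U \<Longrightarrow> U \<subseteq> cplx_points (NSimp X L)"
    by (simp add: openin_Ncplx)
  ultimately show ?thesis
    by (metis openin_subset openin_topspace subset_antisym)
qed

lemma openin_Ncplx_sub:
  assumes "openin (powertop_real UNIV) T"
  shows "openin (Ncplx X L) (T \<inter> cplx_points (NSimp X L))"
  unfolding openin_Ncplx
proof (intro conjI allI impI)
  show "T \<inter> cplx_points (NSimp X L) \<subseteq> cplx_points (NSimp X L)" by auto
  fix S assume S: "NSimp X L S"
  have "T \<inter> cplx_points (NSimp X L) \<inter> closed_simplex S = closed_simplex S \<inter> T"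
    using closed_simplex_sub[OF S] by auto
  then show "openin (subtopology (powertop_real UNIV) (closed_simplex S)) (T \<inter> cplx_points (NSimp X L) \<inter> closed_simplex S)"
    using openin_subtopology_Int2[OF assms] by simp
qed

lemma cont_Ncplx_id: "continuous_map (Ncplx X L) (powertop_real UNIV) (\<lambda>a. a)"
  unfolding continuous_map_def
proof (intro conjI allI impI)
  show "(\<lambda>a. a) \<in> topspace (Ncplx X L) \<rightarrow> topspace (powertop_real UNIV)" by simp
  fix U :: "'a pt set" assume "openin (powertop_real UNIV) U"
  then have "openin (Ncplx X L) (U \<inter> cplx_points (NSimp X L))" by (rule openin_Ncplx_sub)
  moreover have "{x \<in> topspace (Ncplx X L). x \<in> U} = U \<inter> cplx_points (NSimp X L)"
    by (auto simp: topspace_Ncplx)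
  ultimately show "openin (Ncplx X L) {x \<in> topspace (Ncplx X L). x \<in> U}" by simp
qed

lemma Hausdorff_Ncplx: "Hausdorff_space (Ncplx X L)"
proof -
  have H: "Hausdorff_space (powertop_real (UNIV :: 'a vert set))"
    by (simp add: Hausdorff_space_product_topology)
  show ?thesis
    unfolding Hausdorff_space_def
  proof (intro allI impI)
    fix x y assume xy: "x \<in> topspace (Ncplx X L) \<and> y \<in> topspace (Ncplx X L) \<and> x \<noteq> y"
    then obtain U V where UV: "openin (powertop_real UNIV) U" "openin (powertop_real UNIV) V" "x \<in> U" "y \<in> V" "disjnt U V"
      using H xy unfolding Hausdorff_space_def topspace_powertop by blast
    show "\<exists>U V. openin (Ncplx X L) U \<and> openin (Ncplx X L) V \<and> x \<in> U \<and> y \<in> V \<and> disjnt U V"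
      apply (rule exI[of _ "U \<inter> cplx_points (NSimp X L)"], rule exI[of _ "V \<inter> cplx_points (NSimp X L)"])
      using UV xy openin_Ncplx_sub[OF UV(1)] openin_Ncplx_sub[OF UV(2)]
      by (auto simp: topspace_Ncplx disjnt_def)
  qed
qed

lemma cont_into_Ncplx:
  assumes S: "NSimp X L S" and g: "continuous_map T (powertop_real UNIV) g"
    and gS: "\<And>x. x \<in> topspace T \<Longrightarrow> g x \<in> closed_simplex S"
  shows "continuous_map T (Ncplx X L) g"
  unfolding continuous_map_def
proof (intro conjI allI impI)
  show "g \<in> topspace T \<rightarrow> topspace (Ncplx X L)"
    using gS closed_simplex_sub[OF S] by (auto simp: topspace_Ncplx)
  fix U assume U: "openin (Ncplx X L) U"
  then have "openin (subtopology (powertop_real UNIV) (closed_simplex S)) (U \<inter> closed_simplex S)"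
    using S by (simp add: openin_Ncplx)
  then obtain W where W: "openin (powertop_real UNIV) W" "U \<inter> closed_simplex S = W \<inter> closed_simplex S"
    by (auto simp: openin_subtopology)
  have "{x \<in> topspace T. g x \<in> U} = {x \<in> topspace T. g x \<in> W}"
  proof -
    have "\<And>x. x \<in> topspace T \<Longrightarrow> g x \<in> U \<longleftrightarrow> g x \<in> W"
      using W(2) gS by blast
    then show ?thesis by blast
  qed
  then show "openin T {x \<in> topspace T. g x \<in> U}"
    using openin_continuous_map_preimage[OF g W(1)] by simp
qed

lemma openin_pos_coords:
  assumes "finite F"
  shows "openin (powertop_real UNIV) {a. \<forall>v\<in>F. 0 < a v}"
  using assms
proof (induction F rule: finite_induct)
  case empty
  have "{a. \<forall>v\<in>{}. 0 < a v} = topspace (powertop_real UNIV)" by simp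
  then show ?case by (metis openin_topspace)
next
  case (insert v F)
  have "openin (powertop_real UNIV) {a \<in> topspace (powertop_real UNIV). a v \<in> {0<..}}"
    by (rule openin_continuous_map_preimage[OF continuous_map_product_projection]) auto
  then have o: "openin (powertop_real UNIV) {a. 0 < a v}" by simp
  have eq: "{a. \<forall>w\<in>insert v F. 0 < a w} = {a. 0 < a v} \<inter> {a. \<forall>w\<in>F. 0 < a w}" by auto
  show ?case by (subst eq) (rule openin_Int[OF o insert.IH])
qed

lemma openin_star:
  assumes "finite F"
  shows "openin (Ncplx X L) {a \<in> cplx_points (NSimp X L). \<forall>v\<in>F. 0 < a v}"
proof -
  have "{a \<in> cplx_points (NSimp X L). \<forall>v\<in>F. 0 < a v} = {a. \<forall>v\<in>F. 0 < a v} \<inter> cplx_points (NSimp X L)"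
    by auto
  then show ?thesis using openin_Ncplx_sub[OF openin_pos_coords[OF assms]] by simp
qed

lemma closed_simplex_closed:
  assumes "finite S"
  shows "closedin (powertop_real UNIV) (closed_simplex S)"
proof -
  have c1: "closedin (powertop_real UNIV) (PiE UNIV (\<lambda>v. if v \<in> S then {0..} else {0::real}))"
    by (subst closedin_product_topology) auto
  have "continuous_map (powertop_real UNIV) euclideanreal (\<lambda>t. sum t S)"
    using assms by (intro continuous_map_sum continuous_map_product_projection) auto
  then have c2: "closedin (powertop_real UNIV) {t \<in> topspace (powertop_real UNIV). sum t S \<in> {1}}"
    by (rule closedin_continuous_map_preimage) auto
  have "closed_simplex S = PiE UNIV (\<lambda>v. if v \<in> S then {0..} else {0::real}) \<inter> {t \<in> topspace (powertop_real UNIV). sum t S \<in> {1}}"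
    by (auto simp: closed_simplex_def PiE_iff split: if_splits) (metis order_refl)
  then show ?thesis using closedin_Int[OF c1 c2] by simp
qed

lemma closed_simplex_compact:
  assumes "finite S"
  shows "compactin (powertop_real UNIV) (closed_simplex S)"
proof -
  have "compactin (powertop_real UNIV) (PiE UNIV (\<lambda>v. {0..1::real}))"
    by (subst compactin_PiE) auto
  moreover have "closed_simplex S \<subseteq> PiE UNIV (\<lambda>v. {0..1::real})"
  proof
    fix t assume t: "t \<in> closed_simplex S"
    have "t v \<le> 1" for v
    proof (cases "v \<in> S")
      case True
      then have "t v \<le> sum t S" using t assms by (intro member_le_sum) (auto simp: closed_simplex_def)
      then show ?thesis using t by (simp add: closed_simplex_def)
    next
      case False then show ?thesis using t by (simp add: closed_simplex_def)
    qed
    then show "t \<in> PiE UNIV (\<lambda>v. {0..1::real})" using t by (auto simp: closed_simplex_def)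
  qed
  ultimately show ?thesis using closed_compactin closed_simplex_closed[OF assms] by blast
qed

lemma compactin_Ncplx_simplex:
  assumes S: "NSimp X L S"
  shows "compactin (Ncplx X L) (closed_simplex S)"
proof -
  have fin: "finite S" using S by (simp add: NSimp_def)
  have c: "compactin (subtopology (powertop_real UNIV) (closed_simplex S)) (closed_simplex S)"
    using closed_simplex_compact[OF fin] by (simp add: compactin_subtopology)
  have "continuous_map (subtopology (powertop_real UNIV) (closed_simplex S)) (Ncplx X L) (\<lambda>a. a)"
    by (rule cont_into_Ncplx[OF S]) (auto intro: continuous_map_from_subtopology)
  from image_compactin[OF c this] show ?thesis by simp
qed


lemma cplxD:
  assumes "a \<in> cplx_points (NSimp X L)"
  shows "finite {v. a v \<noteq> 0}" "{v. a v \<noteq> 0} \<noteq> {}" "{v. a v \<noteq> 0} \<subseteq> Nverts X L"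
    "\<And>v. 0 \<le> a v" "sum a {v. a v \<noteq> 0} = 1"
    "\<exists>x\<in>topspace X. \<forall>v. a v \<noteq> 0 \<longrightarrow> x \<in> wedge X L v"
  using assms unfolding cplx_points_def NSimp_def by blast+

lemma Nverts_PiE: "v \<in> Nverts X L \<Longrightarrow> v \<in> PiE L (\<lambda>\<alpha>. \<alpha>)"
  by (simp add: Nverts_def)

lemma wedge_pt_iff:
  "x \<in> wedge_pt X L a \<longleftrightarrow> x \<in> topspace X \<and> (\<forall>v. a v \<noteq> 0 \<longrightarrow> x \<in> wedge X L v)"
  unfolding wedge_pt_def by blast

lemma wedge_iff: "x \<in> wedge X L v \<longleftrightarrow> x \<in> topspace X \<and> (\<forall>\<alpha>\<in>L. x \<in> v \<alpha>)"
  unfolding wedge_def by blast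

lemma wedge_restrict:
  assumes "L \<subseteq> M" "x \<in> wedge X M v"
  shows "x \<in> wedge X L (restrict v L)"
  using assms by (auto simp: wedge_iff)

lemma restrict_restrict_sub: "L \<subseteq> M \<Longrightarrow> restrict (restrict v M) L = restrict v L"
  by (auto simp: restrict_def fun_eq_iff)

lemma Nverts_restrict:
  assumes "L \<subseteq> M" "v \<in> Nverts X M"
  shows "restrict v L \<in> Nverts X L"
proof -
  have "wedge X M v \<noteq> {}" using assms by (simp add: Nverts_def)
  then obtain x where "x \<in> wedge X M v" by blast
  then have "x \<in> wedge X L (restrict v L)" using wedge_restrict[OF assms(1)] by blast
  moreover have "restrict v L \<in> PiE L (\<lambda>\<alpha>. \<alpha>)" using assms by (auto simp: Nverts_def PiE_iff)
  ultimately show ?thesis by (auto simp: Nverts_def)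
qed

lemma proj_nz:
  assumes "proj_pt L a w \<noteq> 0" shows "\<exists>v. a v \<noteq> 0 \<and> restrict v L = w"
proof (rule ccontr)
  assume "\<not> ?thesis"
  then have "{v. a v \<noteq> 0 \<and> restrict v L = w} = {}" by auto
  then have "proj_pt L a w = 0" unfolding proj_pt_def by (simp only: sum.empty)
  with assms show False by simp
qed

lemma proj_sum:
  assumes "finite T" "{v. a v \<noteq> 0} \<subseteq> T"
  shows "proj_pt L a w = sum a {v \<in> T. restrict v L = w}"
  unfolding proj_pt_def using assms by (intro sum.mono_neutral_left) auto

lemma proj_supp:
  assumes fin: "finite {v. a v \<noteq> 0}" and nn: "\<And>v. 0 \<le> a v"
  shows "{w. proj_pt L a w \<noteq> 0} = (\<lambda>v. restrict v L) ` {v. a v \<noteq> 0}"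
proof (intro set_eqI iffI)
  fix w assume "w \<in> {w. proj_pt L a w \<noteq> 0}"
  then show "w \<in> (\<lambda>v. restrict v L) ` {v. a v \<noteq> 0}" using proj_nz by fastforce
next
  fix w assume "w \<in> (\<lambda>v. restrict v L) ` {v. a v \<noteq> 0}"
  then obtain v where v: "a v \<noteq> 0" "restrict v L = w" by auto
  have fin2: "finite {v. a v \<noteq> 0 \<and> restrict v L = w}" using fin by (rule finite_subset[rotated]) auto
  have "0 < a v" using v nn[of v] by auto
  moreover have "a v \<le> proj_pt L a w"
    unfolding proj_pt_def using v fin2 nn by (intro member_le_sum) auto
  ultimately show "w \<in> {w. proj_pt L a w \<noteq> 0}" by auto
qed

lemma proj_nonneg: "(\<And>v. 0 \<le> a v) \<Longrightarrow> 0 \<le> proj_pt L a w"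
  unfolding proj_pt_def by (intro sum_nonneg) auto

lemma proj_total:
  assumes fin: "finite {v. a v \<noteq> 0}"
  shows "sum (proj_pt L a) {w. proj_pt L a w \<noteq> 0} = sum a {v. a v \<noteq> 0}"
proof -
  let ?S = "{v. a v \<noteq> 0}"
  let ?I = "(\<lambda>v. restrict v L) ` ?S"
  have sub: "{w. proj_pt L a w \<noteq> 0} \<subseteq> ?I"
  proof
    fix w assume "w \<in> {w. proj_pt L a w \<noteq> 0}"
    then show "w \<in> ?I" using proj_nz by fastforce
  qed
  have "sum (proj_pt L a) {w. proj_pt L a w \<noteq> 0} = sum (proj_pt L a) ?I"
    using fin sub by (intro sum.mono_neutral_left) auto
  also have "\<dots> = sum (\<lambda>w. sum a {v \<in> ?S. restrict v L = w}) ?I"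
    by (intro sum.cong refl) (simp add: proj_pt_def)
  also have "\<dots> = sum a ?S"
    using sum.image_gen[OF fin, of a "\<lambda>v. restrict v L"] by simp
  finally show ?thesis .
qed

lemma proj_cplx:
  assumes "L \<subseteq> M" and a: "a \<in> cplx_points (NSimp X M)"
  shows "proj_pt L a \<in> cplx_points (NSimp X L)"
proof -
  note A = cplxD[OF a]
  have supp: "{w. proj_pt L a w \<noteq> 0} = (\<lambda>v. restrict v L) ` {v. a v \<noteq> 0}"
    by (rule proj_supp[OF A(1) A(4)])
  obtain x where x: "x \<in> topspace X" "\<forall>v. a v \<noteq> 0 \<longrightarrow> x \<in> wedge X M v" using A(6) by blast
  have "NSimp X L {w. proj_pt L a w \<noteq> 0}"
    unfolding NSimp_def supp
  proof (intro conjI)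
    show "finite ((\<lambda>v. restrict v L) ` {v. a v \<noteq> 0})" using A(1) by simp
    show "(\<lambda>v. restrict v L) ` {v. a v \<noteq> 0} \<noteq> {}" using A(2) by simp
    show "(\<lambda>v. restrict v L) ` {v. a v \<noteq> 0} \<subseteq> Nverts X L"
      using A(3) Nverts_restrict[OF assms(1)] by blast
    have "x \<in> topspace X \<inter> \<Inter> (wedge X L ` (\<lambda>v. restrict v L) ` {v. a v \<noteq> 0})"
      using x wedge_restrict[OF assms(1)] by blast
    then show "topspace X \<inter> \<Inter> (wedge X L ` (\<lambda>v. restrict v L) ` {v. a v \<noteq> 0}) \<noteq> {}" by blast
  qed
  moreover have "sum (proj_pt L a) {w. proj_pt L a w \<noteq> 0} = 1"
    using proj_total[OF A(1)] A(5) by simp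
  moreover have "\<forall>w. 0 \<le> proj_pt L a w" using proj_nonneg A(4) by blast
  ultimately show ?thesis by (simp add: cplx_points_def)
qed

lemma proj_proj:
  assumes "L \<subseteq> M" and fin: "finite {v. a v \<noteq> 0}"
  shows "proj_pt L (proj_pt M a) = proj_pt L a"
proof
  fix w
  let ?S = "{v. a v \<noteq> 0}"
  let ?I = "(\<lambda>v. restrict v M) ` ?S"
  have sub: "{u. proj_pt M a u \<noteq> 0} \<subseteq> ?I"
  proof
    fix u assume "u \<in> {u. proj_pt M a u \<noteq> 0}"
    then show "u \<in> ?I" using proj_nz by fastforce
  qed
  have "proj_pt L (proj_pt M a) w = sum (proj_pt M a) {u \<in> ?I. restrict u L = w}"
    using fin sub by (intro proj_sum) auto
  also have "\<dots> = sum (\<lambda>u. sum a {v \<in> ?S. restrict v M = u}) {u \<in> ?I. restrict u L = w}"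
    by (intro sum.cong refl) (simp add: proj_pt_def)
  also have "\<dots> = sum a {v \<in> ?S. restrict v L = w}"
  proof -
    let ?S' = "{v \<in> ?S. restrict v L = w}"
    have f': "finite ?S'" using fin by simp
    have "sum a ?S' = sum (\<lambda>u. sum a {v \<in> ?S'. restrict v M = u}) ((\<lambda>v. restrict v M) ` ?S')"
      by (rule sum.image_gen[OF f'])
    also have "(\<lambda>v. restrict v M) ` ?S' = {u \<in> ?I. restrict u L = w}"
    proof
      have rr: "\<And>v. restrict (restrict v M) L = restrict v L" using restrict_restrict_sub[OF assms(1)] by blast
      show "(\<lambda>v. restrict v M) ` ?S' \<subseteq> {u \<in> ?I. restrict u L = w}" using rr by auto
      show "{u \<in> ?I. restrict u L = w} \<subseteq> (\<lambda>v. restrict v M) ` ?S'"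
      proof
        fix u assume "u \<in> {u \<in> ?I. restrict u L = w}"
        then obtain v where v: "a v \<noteq> 0" "u = restrict v M" "restrict u L = w" by auto
        have "restrict v L = w" by (metis rr v(2) v(3))
        with v(1) have "v \<in> ?S'" by simp
        then show "u \<in> (\<lambda>v. restrict v M) ` ?S'" using v(2) by blast
      qed
    qed
    also have "sum (\<lambda>u. sum a {v \<in> ?S'. restrict v M = u}) {u \<in> ?I. restrict u L = w}
        = sum (\<lambda>u. sum a {v \<in> ?S. restrict v M = u}) {u \<in> ?I. restrict u L = w}"
    proof (rule sum.cong[OF refl])
      fix u assume "u \<in> {u \<in> ?I. restrict u L = w}"
      then have uw: "restrict u L = w" by simp
      have rr: "\<And>v. restrict (restrict v M) L = restrict v L" using restrict_restrict_sub[OF assms(1)] by blast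
      have "\<And>v. restrict v M = u \<Longrightarrow> restrict v L = w" using uw rr by metis
      then show "sum a {v \<in> ?S'. restrict v M = u} = sum a {v \<in> ?S. restrict v M = u}"
        by (intro arg_cong[where f="sum a"]) auto
    qed
    finally show ?thesis by (rule sym)
  qed
  also have "\<dots> = proj_pt L a w" by (simp add: proj_pt_def)
  finally show "proj_pt L (proj_pt M a) w = proj_pt L a w" .
qed

lemma proj_self:
  assumes "\<And>v. a v \<noteq> 0 \<Longrightarrow> v \<in> extensional L"
  shows "proj_pt L a = a"
proof
  fix w
  have e: "\<And>v. a v \<noteq> 0 \<Longrightarrow> restrict v L = v" using assms by (simp add: extensional_restrict)
  show "proj_pt L a w = a w"
  proof (cases "a w = 0")
    case True
    then have "{v. a v \<noteq> 0 \<and> restrict v L = w} = {}" using e by auto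
    then show ?thesis using True by (simp only: proj_pt_def sum.empty)
  next
    case False
    then have "{v. a v \<noteq> 0 \<and> restrict v L = w} = {w}" using e by auto
    then show ?thesis by (simp add: proj_pt_def)
  qed
qed

lemma proj_lin:
  assumes "finite {v. a v \<noteq> 0}" "finite {v. b v \<noteq> 0}"
  shows "proj_pt L (\<lambda>v. s * a v + t * b v) w = s * proj_pt L a w + t * proj_pt L b w"
proof -
  let ?T = "{v. a v \<noteq> 0} \<union> {v. b v \<noteq> 0}"
  have fT: "finite ?T" using assms by simp
  have "proj_pt L (\<lambda>v. s * a v + t * b v) w = (\<Sum>v\<in>{v \<in> ?T. restrict v L = w}. s * a v + t * b v)"
    by (rule proj_sum[OF fT]) auto
  also have "\<dots> = s * sum a {v \<in> ?T. restrict v L = w} + t * sum b {v \<in> ?T. restrict v L = w}"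
    by (simp add: sum.distrib sum_distrib_left)
  also have "\<dots> = s * proj_pt L a w + t * proj_pt L b w"
    using proj_sum[OF fT, of a L w] proj_sum[OF fT, of b L w] by auto
  finally show ?thesis .
qed


locale ncov =
  fixes X :: "'a topology" and A :: "'a set set set" and \<phi> :: "'a set set \<Rightarrow> 'a set \<Rightarrow> 'a \<Rightarrow> real"
  assumes covers: "\<forall>\<alpha>\<in>A. normal_cover X \<alpha> (\<phi> \<alpha>)"
begin

lemma nc_closed: "\<alpha> \<in> A \<Longrightarrow> V \<in> \<alpha> \<Longrightarrow> closedin X V"
  using covers by (simp add: normal_cover_def)

lemma nc_sub: "\<alpha> \<in> A \<Longrightarrow> V \<in> \<alpha> \<Longrightarrow> V \<subseteq> topspace X"
  using nc_closed closedin_subset by blast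

lemma nc_union: "\<alpha> \<in> A \<Longrightarrow> \<Union>\<alpha> = topspace X"
  using covers by (simp add: normal_cover_def)

lemma nc_cont: "\<alpha> \<in> A \<Longrightarrow> V \<in> \<alpha> \<Longrightarrow> continuous_map X euclideanreal (\<phi> \<alpha> V)"
  using covers by (simp add: normal_cover_def)

lemma nc_nonneg: "\<alpha> \<in> A \<Longrightarrow> V \<in> \<alpha> \<Longrightarrow> x \<in> topspace X \<Longrightarrow> 0 \<le> \<phi> \<alpha> V x"
  using covers by (simp add: normal_cover_def)

lemma nc_pos:
  assumes "\<alpha> \<in> A" "V \<in> \<alpha>" "x \<in> topspace X" "\<phi> \<alpha> V x \<noteq> 0"
  shows "x \<in> V"
proof -
  have "0 < \<phi> \<alpha> V x" using nc_nonneg[OF assms(1-3)] assms(4) by simp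
  then have "x \<in> {x \<in> topspace X. \<phi> \<alpha> V x > 0}" using assms(3) by simp
  also have "\<dots> \<subseteq> X closure_of {x \<in> topspace X. \<phi> \<alpha> V x > 0}" by (rule closure_of_subset) auto
  also have "\<dots> \<subseteq> X interior_of V" using covers assms(1,2) by (simp add: normal_cover_def)
  also have "\<dots> \<subseteq> V" by (rule interior_of_subset)
  finally show ?thesis .
qed

lemma nc_locfin:
  assumes "\<alpha> \<in> A" "x \<in> topspace X"
  shows "\<exists>W. openin X W \<and> x \<in> W \<and> (\<forall>y\<in>W. \<forall>V\<in>\<alpha>. y \<in> V \<longrightarrow> x \<in> V) \<and> finite {V\<in>\<alpha>. V \<inter> W \<noteq> {}}"
proof -
  have "locally_finite_in X \<alpha>" using covers assms(1) by (simp add: normal_cover_def)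
  then obtain N where N: "openin X N" "x \<in> N" "finite {U \<in> \<alpha>. U \<inter> N \<noteq> {}}"
    using assms(2) unfolding locally_finite_in_def by blast
  let ?F = "{U \<in> {U \<in> \<alpha>. U \<inter> N \<noteq> {}}. x \<notin> U}"
  have cF: "closedin X (\<Union>?F)"
  proof (rule closedin_Union)
    show "finite ?F" using N(3) by (rule finite_subset[rotated]) auto
    show "\<And>S. S \<in> ?F \<Longrightarrow> closedin X S" using nc_closed[OF assms(1)] by auto
  qed
  define W where "W = N - \<Union>?F"
  have "openin X W" unfolding W_def using N(1) cF by (rule openin_diff)
  moreover have "x \<in> W" unfolding W_def using N(2) by auto
  moreover have "\<forall>y\<in>W. \<forall>V\<in>\<alpha>. y \<in> V \<longrightarrow> x \<in> V" unfolding W_def by blast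
  moreover have "finite {V\<in>\<alpha>. V \<inter> W \<noteq> {}}"
    using N(3) by (rule finite_subset[rotated]) (auto simp: W_def)
  ultimately show ?thesis by blast
qed

lemma nc_fin: "\<alpha> \<in> A \<Longrightarrow> x \<in> topspace X \<Longrightarrow> finite {V\<in>\<alpha>. x \<in> V}"
proof -
  assume a: "\<alpha> \<in> A" "x \<in> topspace X"
  obtain W where W: "x \<in> W" "finite {V\<in>\<alpha>. V \<inter> W \<noteq> {}}" using nc_locfin[OF a] by blast
  show ?thesis using W(2) by (rule finite_subset[rotated]) (use W(1) in auto)
qed

lemma nc_sum:
  assumes "\<alpha> \<in> A" "x \<in> topspace X"
  shows "(\<Sum>V\<in>{V\<in>\<alpha>. x \<in> V}. \<phi> \<alpha> V x) = 1"
proof -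
  have "(\<Sum>V\<in>{V\<in>\<alpha>. \<phi> \<alpha> V x \<noteq> 0}. \<phi> \<alpha> V x) = 1"
    using covers assms by (simp add: normal_cover_def)
  moreover have "(\<Sum>V\<in>{V\<in>\<alpha>. \<phi> \<alpha> V x \<noteq> 0}. \<phi> \<alpha> V x) = (\<Sum>V\<in>{V\<in>\<alpha>. x \<in> V}. \<phi> \<alpha> V x)"
    using nc_fin[OF assms] nc_pos[OF assms(1) _ assms(2)] by (intro sum.mono_neutral_left) auto
  ultimately show ?thesis by simp
qed

lemma nc_locfin_L:
  assumes "finite L" "L \<subseteq> A" "x \<in> topspace X"
  shows "\<exists>W. openin X W \<and> x \<in> W \<and> (\<forall>y\<in>W. \<forall>\<alpha>\<in>L. \<forall>V\<in>\<alpha>. y \<in> V \<longrightarrow> x \<in> V)"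
  using assms
proof (induction L rule: finite_induct)
  case empty
  then show ?case using openin_topspace by blast
next
  case (insert \<alpha> L)
  then obtain W1 where W1: "openin X W1" "x \<in> W1" "\<forall>y\<in>W1. \<forall>\<beta>\<in>L. \<forall>V\<in>\<beta>. y \<in> V \<longrightarrow> x \<in> V" by auto
  obtain W2 where W2: "openin X W2" "x \<in> W2" "\<forall>y\<in>W2. \<forall>V\<in>\<alpha>. y \<in> V \<longrightarrow> x \<in> V"
    using nc_locfin[of \<alpha> x] insert by auto
  show ?case using W1 W2 by (intro exI[of _ "W1 \<inter> W2"]) auto
qed

definition Gf :: "'a set set set \<Rightarrow> 'a pt \<Rightarrow> 'a \<Rightarrow> 'a set set set \<Rightarrow> 'a pt" where
  "Gf L0 a x N = (\<lambda>v. if v \<in> PiE N (\<lambda>\<alpha>. \<alpha>) then a (restrict v L0) * (\<Prod>\<alpha>\<in>N - L0. \<phi> \<alpha> (v \<alpha>) x) else 0)"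

definition GA :: "'a set set set \<Rightarrow> 'a pt \<Rightarrow> 'a \<Rightarrow> bool" where
  "GA L0 a x \<longleftrightarrow> x \<in> topspace X \<and> (\<forall>w. a w \<noteq> 0 \<longrightarrow> w \<in> PiE L0 (\<lambda>\<alpha>. \<alpha>) \<and> (\<forall>\<alpha>\<in>L0. x \<in> w \<alpha>))"

lemma G1:
  assumes "N \<subseteq> A" "L0 \<subseteq> N" "GA L0 a x" "Gf L0 a x N v \<noteq> 0" "finite N"
  shows "v \<in> PiE N (\<lambda>\<alpha>. {V\<in>\<alpha>. x \<in> V})"
proof -
  have v: "v \<in> PiE N (\<lambda>\<alpha>. \<alpha>)" using assms(4) by (auto simp: Gf_def split: if_splits)
  have a: "a (restrict v L0) \<noteq> 0" and p: "(\<Prod>\<alpha>\<in>N - L0. \<phi> \<alpha> (v \<alpha>) x) \<noteq> 0"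
    using assms(4) v by (auto simp: Gf_def)
  have x: "x \<in> topspace X" using assms(3) by (simp add: GA_def)
  have "x \<in> v \<alpha>" if "\<alpha> \<in> N" for \<alpha>
  proof (cases "\<alpha> \<in> L0")
    case True
    then have "x \<in> restrict v L0 \<alpha>" using a assms(3) by (auto simp: GA_def)
    then show ?thesis using True by simp
  next
    case False
    have "\<phi> \<alpha> (v \<alpha>) x \<noteq> 0"
    proof
      assume "\<phi> \<alpha> (v \<alpha>) x = 0"
      then have "(\<Prod>\<alpha>\<in>N - L0. \<phi> \<alpha> (v \<alpha>) x) = 0"
        using that False assms(5) by (subst prod_zero_iff) auto
      then show False using p by simp
    qed
    then show ?thesis using nc_pos[of \<alpha> "v \<alpha>" x] v that assms(1) x by (auto simp: PiE_iff)
  qed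
  then show ?thesis using v by (auto simp: PiE_iff)
qed

lemma G1_wedge:
  assumes "N \<subseteq> A" "L0 \<subseteq> N" "GA L0 a x" "Gf L0 a x N v \<noteq> 0" "finite N"
  shows "x \<in> wedge X N v" "v \<in> Nverts X N"
proof -
  have v: "v \<in> PiE N (\<lambda>\<alpha>. {V\<in>\<alpha>. x \<in> V})" by (rule G1[OF assms])
  have x: "x \<in> topspace X" using assms(3) by (simp add: GA_def)
  show w: "x \<in> wedge X N v" using v x by (auto simp: wedge_iff PiE_iff)
  show "v \<in> Nverts X N" using v w unfolding Nverts_def by (auto simp: PiE_iff)
qed

end


context ncov begin

lemma G2:
  assumes NA: "N' \<subseteq> A" and fN': "finite N'" and LN: "L0 \<subseteq> N" and NN: "N \<subseteq> N'" and GA: "GA L0 a x"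
  shows "proj_pt N (Gf L0 a x N') = Gf L0 a x N"
proof
  fix w
  define T where "T = (\<lambda>\<alpha>. {V\<in>\<alpha>. x \<in> V})"
  have x: "x \<in> topspace X" using GA by (simp add: GA_def)
  have fN: "finite N" using fN' NN by (rule finite_subset[rotated])
  have finT: "finite (T \<alpha>)" if "\<alpha> \<in> A" for \<alpha> using nc_fin[OF that x] by (simp add: T_def)
  have fPi: "finite (PiE N' T)" using finT NA fN' by (intro finite_PiE) auto
  have suppG: "{v. Gf L0 a x N' v \<noteq> 0} \<subseteq> PiE N' T"
    using G1[OF NA order.trans[OF LN NN] GA _ fN'] by (auto simp: T_def)
  have "proj_pt N (Gf L0 a x N') w = sum (Gf L0 a x N') {v \<in> PiE N' T. restrict v N = w}"
    by (rule proj_sum[OF fPi suppG])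
  also have "\<dots> = Gf L0 a x N w"
  proof (cases "w \<in> PiE N T")
    case False
    have "{v \<in> PiE N' T. restrict v N = w} = {}"
    proof -
      have "restrict v N \<in> PiE N T" if "v \<in> PiE N' T" for v using that NN by (auto simp: PiE_iff Pi_iff subset_iff)
      then show ?thesis using False by blast
    qed
    moreover have "Gf L0 a x N w = 0"
    proof (rule ccontr)
      assume "Gf L0 a x N w \<noteq> 0"
      then have "w \<in> PiE N T" using G1[OF order.trans[OF NN NA] LN GA _ fN] by (simp add: T_def)
      then show False using False by simp
    qed
    ultimately show ?thesis by (metis sum.empty)
  next
    case True
    define m where "m = (\<lambda>u \<alpha>. if \<alpha> \<in> N then w \<alpha> else u \<alpha>)"
    have bij: "bij_betw m (PiE (N' - N) T) {v \<in> PiE N' T. restrict v N = w}"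
    proof (rule bij_betw_byWitness[where f'="\<lambda>v. restrict v (N' - N)"])
      show "\<forall>u\<in>PiE (N' - N) T. restrict (m u) (N' - N) = u"
        by (auto simp: m_def PiE_iff extensional_def fun_eq_iff)
      show "\<forall>v\<in>{v \<in> PiE N' T. restrict v N = w}. m (restrict v (N' - N)) = v"
        by (auto simp: m_def PiE_iff extensional_def fun_eq_iff)
      show "m ` PiE (N' - N) T \<subseteq> {v \<in> PiE N' T. restrict v N = w}"
      proof
        fix v assume "v \<in> m ` PiE (N' - N) T"
        then obtain u where u: "u \<in> PiE (N' - N) T" "v = m u" by blast
        have e: "m u \<in> extensional N'"
          unfolding extensional_def m_def using u NN by (auto simp: PiE_iff extensional_def)
        have p: "m u \<alpha> \<in> T \<alpha>" if "\<alpha> \<in> N'" for \<alpha>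
          using u True that by (auto simp: PiE_iff m_def)
        have r: "restrict (m u) N = w"
        proof
          fix \<alpha> show "restrict (m u) N \<alpha> = w \<alpha>"
            using True by (cases "\<alpha> \<in> N") (auto simp: m_def PiE_iff extensional_def)
        qed
        show "v \<in> {v \<in> PiE N' T. restrict v N = w}" using e p r u(2) by (simp add: PiE_iff)
      qed
      show "(\<lambda>v. restrict v (N' - N)) ` {v \<in> PiE N' T. restrict v N = w} \<subseteq> PiE (N' - N) T"
        by (auto simp: PiE_iff)
    qed
    have wN: "w \<in> PiE N (\<lambda>\<alpha>. \<alpha>)" using True by (auto simp: PiE_iff T_def)
    let ?c = "a (restrict w L0) * (\<Prod>\<alpha>\<in>N - L0. \<phi> \<alpha> (w \<alpha>) x)"
    have Gm: "Gf L0 a x N' (m u) = ?c * (\<Prod>\<alpha>\<in>N' - N. \<phi> \<alpha> (u \<alpha>) x)" if u: "u \<in> PiE (N' - N) T" for u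
    proof -
      have mu: "m u \<in> PiE N' (\<lambda>\<alpha>. \<alpha>)"
        using u True NN by (auto simp: m_def PiE_iff T_def extensional_def)
      have r: "restrict (m u) L0 = restrict w L0" using LN by (auto simp: m_def restrict_def fun_eq_iff)
      have split: "N' - L0 = (N - L0) \<union> (N' - N)" using LN NN by auto
      have "(\<Prod>\<alpha>\<in>N' - L0. \<phi> \<alpha> (m u \<alpha>) x) = (\<Prod>\<alpha>\<in>N - L0. \<phi> \<alpha> (m u \<alpha>) x) * (\<Prod>\<alpha>\<in>N' - N. \<phi> \<alpha> (m u \<alpha>) x)"
        unfolding split using fN fN' by (intro prod.union_disjoint) auto
      also have "(\<Prod>\<alpha>\<in>N - L0. \<phi> \<alpha> (m u \<alpha>) x) = (\<Prod>\<alpha>\<in>N - L0. \<phi> \<alpha> (w \<alpha>) x)"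
        by (intro prod.cong refl) (auto simp: m_def)
      also have "(\<Prod>\<alpha>\<in>N' - N. \<phi> \<alpha> (m u \<alpha>) x) = (\<Prod>\<alpha>\<in>N' - N. \<phi> \<alpha> (u \<alpha>) x)"
        by (intro prod.cong refl) (auto simp: m_def)
      finally show ?thesis using mu r by (simp add: Gf_def mult.assoc)
    qed
    have "sum (Gf L0 a x N') {v \<in> PiE N' T. restrict v N = w} = (\<Sum>u\<in>PiE (N' - N) T. Gf L0 a x N' (m u))"
      using sum.reindex_bij_betw[OF bij, of "Gf L0 a x N'"] by simp
    also have "\<dots> = (\<Sum>u\<in>PiE (N' - N) T. ?c * (\<Prod>\<alpha>\<in>N' - N. \<phi> \<alpha> (u \<alpha>) x))"
      using Gm by (rule sum.cong[OF refl])
    also have "\<dots> = ?c * (\<Sum>u\<in>PiE (N' - N) T. (\<Prod>\<alpha>\<in>N' - N. \<phi> \<alpha> (u \<alpha>) x))"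
      by (simp add: sum_distrib_left)
    also have "(\<Sum>u\<in>PiE (N' - N) T. (\<Prod>\<alpha>\<in>N' - N. \<phi> \<alpha> (u \<alpha>) x)) = (\<Prod>\<alpha>\<in>N' - N. \<Sum>V\<in>T \<alpha>. \<phi> \<alpha> V x)"
      using fN' finT NA by (intro prod_sum_PiE[symmetric]) auto
    also have "\<dots> = 1"
      using nc_sum[OF _ x] NA by (intro prod.neutral) (auto simp: T_def)
    finally have fin: "sum (Gf L0 a x N') {v \<in> PiE N' T. restrict v N = w} = ?c * 1" .
    have Gw: "Gf L0 a x N w = ?c" using wN by (simp add: Gf_def)
    show ?thesis using fin Gw by simp
  qed
  finally show "proj_pt N (Gf L0 a x N') w = Gf L0 a x N w" .
qed

lemma G0:
  assumes "GA L0 a x"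
  shows "Gf L0 a x L0 = a"
proof
  fix v
  show "Gf L0 a x L0 v = a v"
  proof (cases "v \<in> PiE L0 (\<lambda>\<alpha>. \<alpha>)")
    case True
    then have "restrict v L0 = v" by (simp add: PiE_iff extensional_restrict)
    then show ?thesis using True by (simp add: Gf_def)
  next
    case False
    then show ?thesis using assms by (auto simp: Gf_def GA_def)
  qed
qed

lemma G_fin:
  assumes "N \<subseteq> A" "finite N" "L0 \<subseteq> N" "GA L0 a x"
  shows "finite {v. Gf L0 a x N v \<noteq> 0}"
proof -
  have x: "x \<in> topspace X" using assms(4) by (simp add: GA_def)
  have "finite (PiE N (\<lambda>\<alpha>. {V\<in>\<alpha>. x \<in> V}))"
    using assms(1,2) nc_fin[OF _ x] by (intro finite_PiE) auto
  then show ?thesis by (rule finite_subset[rotated]) (use G1[OF assms(1,3,4) _ assms(2)] in auto)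
qed

lemma G_nonneg:
  assumes "N \<subseteq> A" "x \<in> topspace X" "\<And>w. 0 \<le> a w"
  shows "0 \<le> Gf L0 a x N v"
  unfolding Gf_def using assms nc_nonneg
  by (auto intro!: mult_nonneg_nonneg prod_nonneg simp: PiE_iff subset_eq)

lemma G_cplx:
  assumes NA: "N \<subseteq> A" and fN: "finite N" and LN: "L0 \<subseteq> N" and GA: "GA L0 a x"
    and nn: "\<And>w. 0 \<le> a w" and fa: "finite {w. a w \<noteq> 0}" and sa: "sum a {w. a w \<noteq> 0} = 1"
  shows "Gf L0 a x N \<in> cplx_points (NSimp X N)"
proof -
  have x: "x \<in> topspace X" using GA by (simp add: GA_def)
  have fG: "finite {v. Gf L0 a x N v \<noteq> 0}" by (rule G_fin[OF NA fN LN GA])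
  have "sum (Gf L0 a x N) {v. Gf L0 a x N v \<noteq> 0} = sum (proj_pt L0 (Gf L0 a x N)) {w. proj_pt L0 (Gf L0 a x N) w \<noteq> 0}"
    using proj_total[OF fG] by simp
  also have "proj_pt L0 (Gf L0 a x N) = a"
    using G2[OF NA fN subset_refl LN GA] G0[OF GA] by simp
  finally have s1: "sum (Gf L0 a x N) {v. Gf L0 a x N v \<noteq> 0} = 1" using sa by simp
  have ne: "{v. Gf L0 a x N v \<noteq> 0} \<noteq> {}"
  proof
    assume "{v. Gf L0 a x N v \<noteq> 0} = {}"
    then have "sum (Gf L0 a x N) {v. Gf L0 a x N v \<noteq> 0} = 0" by (simp only: sum.empty)
    with s1 show False by simp
  qed
  have "NSimp X N {v. Gf L0 a x N v \<noteq> 0}"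
    unfolding NSimp_def
  proof (intro conjI fG ne)
    show "{v. Gf L0 a x N v \<noteq> 0} \<subseteq> Nverts X N" using G1_wedge[OF NA LN GA _ fN] by blast
    have "x \<in> topspace X \<inter> \<Inter> (wedge X N ` {v. Gf L0 a x N v \<noteq> 0})"
      using G1_wedge[OF NA LN GA _ fN] x by blast
    then show "topspace X \<inter> \<Inter> (wedge X N ` {v. Gf L0 a x N v \<noteq> 0}) \<noteq> {}" by blast
  qed
  then show ?thesis using s1 G_nonneg[OF NA x nn] by (simp add: cplx_points_def)
qed

definition a0 :: "'a pt" where "a0 = (\<lambda>w. if w = (\<lambda>_. undefined) then 1 else 0)"

lemma GA_a0: "x \<in> topspace X \<Longrightarrow> GA {} a0 x"
  by (auto simp: GA_def a0_def)

lemma a0_props: "\<And>w. 0 \<le> a0 w" "finite {w. a0 w \<noteq> 0}" "sum a0 {w. a0 w \<noteq> 0} = 1"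
proof -
  have e: "{w. a0 w \<noteq> 0} = {\<lambda>_. undefined}" by (auto simp: a0_def)
  show "\<And>w. 0 \<le> a0 w" by (simp add: a0_def)
  show "finite {w. a0 w \<noteq> 0}" using e by simp
  show "sum a0 {w. a0 w \<noteq> 0} = 1" using e by (simp add: a0_def)
qed

lemma p_lam_G:
  assumes "L \<subseteq> A" "finite L" "x \<in> topspace X"
  shows "p_lam X \<phi> L x = Gf {} a0 x L"
proof
  fix v
  show "p_lam X \<phi> L x v = Gf {} a0 x L v"
  proof (cases "Gf {} a0 x L v = 0")
    case False
    then have "v \<in> Nverts X L" using G1_wedge[OF assms(1) _ GA_a0[OF assms(3)] _ assms(2)] by blast
    moreover have "restrict v {} = (\<lambda>_. undefined)" by (simp add: restrict_def)
    ultimately show ?thesis by (simp add: p_lam_def Gf_def a0_def Nverts_def)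
  next
    case True
    show ?thesis
    proof (cases "v \<in> Nverts X L")
      case False then show ?thesis using True by (simp add: p_lam_def)
    next
      case vN: True
      have "restrict v {} = (\<lambda>_. undefined)" by (simp add: restrict_def)
      then show ?thesis using True vN by (simp add: p_lam_def Gf_def a0_def Nverts_def)
    qed
  qed
qed

lemma p_lam_cplx:
  assumes "L \<subseteq> A" "finite L" "x \<in> topspace X"
  shows "p_lam X \<phi> L x \<in> cplx_points (NSimp X L)"
  unfolding p_lam_G[OF assms]
  using G_cplx[OF assms(1,2) empty_subsetI GA_a0[OF assms(3)] a0_props] .

lemma p_lam_compat:
  assumes "M \<subseteq> A" "finite M" "L \<subseteq> M" "x \<in> topspace X"
  shows "proj_pt L (p_lam X \<phi> M x) = p_lam X \<phi> L x"
proof -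
  have LA: "L \<subseteq> A" "finite L" using assms by (auto intro: finite_subset)
  show ?thesis
    unfolding p_lam_G[OF assms(1,2,4)] p_lam_G[OF \<open>L \<subseteq> A\<close> \<open>finite L\<close> assms(4)]
    by (rule G2[OF assms(1,2) empty_subsetI assms(3) GA_a0[OF assms(4)]])
qed

lemma p_lam_wedge:
  assumes "L \<subseteq> A" "finite L" "x \<in> topspace X" "p_lam X \<phi> L x v \<noteq> 0"
  shows "x \<in> wedge X L v"
  using assms G1_wedge[OF assms(1) _ GA_a0[OF assms(3)] _ assms(2)] p_lam_G[OF assms(1-3)] by auto

end


lemma Lambda_iff: "L \<in> Lambda A \<longleftrightarrow> finite L \<and> L \<subseteq> A"
  by (simp add: Lambda_def)

lemma topspace_Ninf: "topspace (Ninf X A) = Ninf_set X A"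
  unfolding Ninf_def by (auto simp: Ninf_set_def topspace_subtopology)

lemma Ninf_setD:
  assumes "z \<in> Ninf_set X A"
  shows "\<And>L. L \<in> Lambda A \<Longrightarrow> z L \<in> cplx_points (NSimp X L)"
    "\<And>L M. L \<in> Lambda A \<Longrightarrow> M \<in> Lambda A \<Longrightarrow> L \<subseteq> M \<Longrightarrow> proj_pt L (z M) = z L"
    "z \<in> extensional (Lambda A)"
  using assms by (auto simp: Ninf_set_def topspace_Ncplx PiE_iff)

lemma Ninf_lift:
  assumes z: "z \<in> Ninf_set X A" and L: "L \<in> Lambda A" and M: "M \<in> Lambda A" and LM: "L \<subseteq> M"
    and v: "z L v \<noteq> 0"
  shows "\<exists>u. z M u \<noteq> 0 \<and> restrict u L = v"
proof -
  have "proj_pt L (z M) v \<noteq> 0" using Ninf_setD(2)[OF z L M LM] v by simp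
  then show ?thesis by (rule proj_nz)
qed

lemma Ninf_restr:
  assumes z: "z \<in> Ninf_set X A" and L: "L \<in> Lambda A" and M: "M \<in> Lambda A" and LM: "L \<subseteq> M"
    and u: "z M u \<noteq> 0"
  shows "z L (restrict u L) \<noteq> 0"
proof -
  note c = cplxD[OF Ninf_setD(1)[OF z M]]
  have "restrict u L \<in> {w. proj_pt L (z M) w \<noteq> 0}"
    using proj_supp[OF c(1) c(4)] u by auto
  then show ?thesis using Ninf_setD(2)[OF z L M LM] by simp
qed

lemma Ninf_topspace_ne:
  assumes "z \<in> Ninf_set X A"
  shows "topspace X \<noteq> {}"
proof -
  have "{} \<in> Lambda A" by (simp add: Lambda_def)
  from cplxD(6)[OF Ninf_setD(1)[OF assms this]] show ?thesis by blast
qed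

locale thm_setting = ncov +
  assumes Haus: "Hausdorff_space X"
    and condI: "\<forall>U x. openin X U \<and> x \<in> U \<longrightarrow> (\<exists>\<alpha>\<in>A. \<Union>{V\<in>\<alpha>. x \<in> V} \<subseteq> U)"
    and condII: "\<forall>f. (\<forall>\<alpha>\<in>A. f \<alpha> \<in> \<alpha>) \<and>
                    (\<forall>L. finite L \<and> L \<noteq> {} \<and> L \<subseteq> A \<longrightarrow> \<Inter>(f ` L) \<noteq> {})
                  \<longrightarrow> \<Inter>(f ` A) \<noteq> {}"
begin

lemma condI':
  assumes "openin X U" "x \<in> U" shows "\<exists>\<alpha>\<in>A. \<forall>V\<in>\<alpha>. x \<in> V \<longrightarrow> V \<subseteq> U"
proof -
  obtain \<alpha> where "\<alpha> \<in> A" "\<Union>{V\<in>\<alpha>. x \<in> V} \<subseteq> U" using condI assms by meson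
  then show ?thesis by blast
qed

lemma piX_unique:
  assumes z: "z \<in> Ninf_set X A"
    and x: "x \<in> topspace X" "\<forall>L\<in>Lambda A. x \<in> wedge_pt X L (z L)"
    and x': "x' \<in> topspace X" "\<forall>L\<in>Lambda A. x' \<in> wedge_pt X L (z L)"
  shows "x = x'"
proof (rule ccontr)
  assume ne: "x \<noteq> x'"
  obtain U U' where UU: "openin X U" "openin X U'" "x \<in> U" "x' \<in> U'" "disjnt U U'"
    using Haus x(1) x'(1) ne unfolding Hausdorff_space_def by blast
  obtain \<alpha> where \<alpha>: "\<alpha> \<in> A" "\<forall>V\<in>\<alpha>. x \<in> V \<longrightarrow> V \<subseteq> U" using condI'[OF UU(1,3)] by blast
  obtain \<gamma> where \<gamma>: "\<gamma> \<in> A" "\<forall>V\<in>\<gamma>. x' \<in> V \<longrightarrow> V \<subseteq> U'" using condI'[OF UU(2,4)] by blast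
  let ?L = "{\<alpha>, \<gamma>}"
  have L: "?L \<in> Lambda A" using \<alpha> \<gamma> by (simp add: Lambda_def)
  note c = cplxD[OF Ninf_setD(1)[OF z L]]
  obtain w where w: "z ?L w \<noteq> 0" using c(2) by blast
  have wN: "w \<in> Nverts X ?L" using c(3) w by blast
  then have wP: "w \<alpha> \<in> \<alpha>" "w \<gamma> \<in> \<gamma>" by (auto simp: Nverts_def PiE_iff)
  have "x \<in> wedge X ?L w" using x(2) L w by (auto simp: wedge_pt_iff)
  then have "x \<in> w \<alpha>" by (simp add: wedge_iff)
  then have s1: "w \<alpha> \<subseteq> U" using \<alpha> wP by blast
  have "x' \<in> wedge X ?L w" using x'(2) L w by (auto simp: wedge_pt_iff)
  then have "x' \<in> w \<gamma>" by (simp add: wedge_iff)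
  then have s2: "w \<gamma> \<subseteq> U'" using \<gamma> wP by blast
  obtain q where "q \<in> wedge X ?L w" using wN by (auto simp: Nverts_def)
  then have "q \<in> w \<alpha>" "q \<in> w \<gamma>" by (auto simp: wedge_iff)
  then show False using s1 s2 UU(5) by (auto simp: disjnt_def)
qed

lemma A_nonempty:
  assumes "topspace X \<noteq> {}"
  shows "A \<noteq> {}"
proof -
  obtain x where "x \<in> topspace X" using assms by blast
  then show ?thesis using condI'[OF openin_topspace] by blast
qed

lemma piX_exists:
  assumes z: "z \<in> Ninf_set X A"
  shows "\<exists>x\<in>topspace X. \<forall>L\<in>Lambda A. x \<in> wedge_pt X L (z L)"
proof -
  have sing: "{\<alpha>} \<in> Lambda A" if "\<alpha> \<in> A" for \<alpha> using that by (simp add: Lambda_def)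
  define S where "S = (\<lambda>\<alpha>. (\<lambda>v. v \<alpha>) ` {v. z {\<alpha>} v \<noteq> 0})"
  have finS: "finite (S \<alpha>)" if "\<alpha> \<in> A" for \<alpha>
    using cplxD(1)[OF Ninf_setD(1)[OF z sing[OF that]]] by (simp add: S_def)
  have neS: "S \<alpha> \<noteq> {}" if "\<alpha> \<in> A" for \<alpha>
    using cplxD(2)[OF Ninf_setD(1)[OF z sing[OF that]]] by (simp add: S_def)
  have subS: "S \<alpha> \<subseteq> \<alpha>" if "\<alpha> \<in> A" for \<alpha>
    using cplxD(3)[OF Ninf_setD(1)[OF z sing[OF that]]] by (auto simp: S_def Nverts_def PiE_iff)
  have inS: "w \<alpha> \<in> S \<alpha>" if "L \<in> Lambda A" "z L w \<noteq> 0" "\<alpha> \<in> L" for L w \<alpha>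
  proof -
    have a1: "{\<alpha>} \<in> Lambda A" using that by (auto simp: Lambda_def)
    have a2: "{\<alpha>} \<subseteq> L" using that(3) by simp
    have "z {\<alpha>} (restrict w {\<alpha>}) \<noteq> 0" by (rule Ninf_restr[OF z a1 that(1) a2 that(2)])
    then show ?thesis unfolding S_def using that(3) by (intro image_eqI[of _ _ "restrict w {\<alpha>}"]) auto
  qed
  have extw: "w \<in> extensional L" if "L \<in> Lambda A" "z L w \<noteq> 0" for L w
    using cplxD(3)[OF Ninf_setD(1)[OF z that(1)]] that(2) by (auto simp: Nverts_def PiE_iff)
  define P where "P = product_topology (\<lambda>\<alpha>. discrete_topology (S \<alpha>)) A"
  have tP: "topspace P = PiE A S" by (simp add: P_def)
  have cP: "compact_space P"
    unfolding P_def compact_space_product_topology using finS by (simp add: compact_space_discrete_topology)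
  define C where "C = (\<lambda>L. {g \<in> topspace P. \<exists>w. z L w \<noteq> 0 \<and> (\<forall>\<alpha>\<in>L. g \<alpha> = w \<alpha>)})"
  have closedC: "closedin P (C L)" if L: "L \<in> Lambda A" for L
  proof -
    define E where "E = (\<lambda>w. {g \<in> topspace P. \<forall>\<alpha>\<in>L. g \<alpha> = w \<alpha>})"
    have "C L = \<Union>(E ` {w. z L w \<noteq> 0})" by (auto simp: C_def E_def)
    moreover have "closedin P (E w)" for w
    proof (cases "L = {}")
      case True
      then show ?thesis by (simp add: E_def)
    next
      case False
      have cl: "closedin P {g \<in> topspace P. g \<alpha> \<in> {w \<alpha>} \<inter> S \<alpha>}" if "\<alpha> \<in> L" for \<alpha>
      proof (rule closedin_continuous_map_preimage)
        show "continuous_map P (discrete_topology (S \<alpha>)) (\<lambda>g. g \<alpha>)"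
          unfolding P_def using that L by (intro continuous_map_product_projection) (auto simp: Lambda_def)
        show "closedin (discrete_topology (S \<alpha>)) ({w \<alpha>} \<inter> S \<alpha>)" by simp
      qed
      have "E w = \<Inter>((\<lambda>\<alpha>. {g \<in> topspace P. g \<alpha> \<in> {w \<alpha>} \<inter> S \<alpha>}) ` L)"
        using False L by (auto simp: E_def tP PiE_iff Lambda_def)
      then show ?thesis using False cl by (auto intro!: closedin_Inter)
    qed
    moreover have "finite {w. z L w \<noteq> 0}" using cplxD(1)[OF Ninf_setD(1)[OF z L]] .
    ultimately show ?thesis by (auto intro!: closedin_Union)
  qed
  from cP have fip: "\<forall>\<U>. (\<forall>D\<in>\<U>. closedin P D) \<and> (\<forall>F. finite F \<and> F \<subseteq> \<U> \<longrightarrow> \<Inter>F \<noteq> {}) \<longrightarrow> \<Inter>\<U> \<noteq> {}"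
    by (simp only: compact_space_fip)
  have cl: "\<forall>D\<in>C ` Lambda A. closedin P D" using closedC by blast
  have f2: "\<forall>F. finite F \<and> F \<subseteq> C ` Lambda A \<longrightarrow> \<Inter>F \<noteq> {}"
    proof (intro allI impI)
      fix F assume F: "finite F \<and> F \<subseteq> C ` Lambda A"
      then obtain Ls where Ls: "finite Ls" "Ls \<subseteq> Lambda A" "F = C ` Ls"
        by (meson finite_subset_image)
      define L where "L = \<Union>Ls"
      have L: "L \<in> Lambda A" using Ls by (auto simp: L_def Lambda_def)
      obtain w where w: "z L w \<noteq> 0" using cplxD(2)[OF Ninf_setD(1)[OF z L]] by blast
      define g where "g = restrict (\<lambda>\<alpha>. if \<alpha> \<in> L then w \<alpha> else (SOME V. V \<in> S \<alpha>)) A"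
      have gP: "g \<in> topspace P"
        unfolding tP
      proof
        fix \<alpha> assume \<alpha>: "\<alpha> \<in> A"
        show "g \<alpha> \<in> S \<alpha>"
        proof (cases "\<alpha> \<in> L")
          case True then show ?thesis using inS[OF L w] \<alpha> by (simp add: g_def)
        next
          case False then show ?thesis using neS[OF \<alpha>] \<alpha> by (simp add: g_def some_in_eq)
        qed
      qed (simp add: g_def)
      have "g \<in> C L'" if "L' \<in> Ls" for L'
      proof -
        have L'L: "L' \<subseteq> L" using that by (auto simp: L_def)
        have L': "L' \<in> Lambda A" using that Ls by auto
        have "z L' (restrict w L') \<noteq> 0" by (rule Ninf_restr[OF z L' L L'L w])
        moreover have "\<forall>\<alpha>\<in>L'. g \<alpha> = restrict w L' \<alpha>"
          using L'L L by (auto simp: g_def Lambda_def)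
        ultimately show ?thesis using gP by (auto simp: C_def)
      qed
      then show "\<Inter>F \<noteq> {}" using Ls(3) by blast
    qed
  have "\<Inter>(C ` Lambda A) \<noteq> {}" using fip cl f2 by blast
  then obtain g where g: "g \<in> \<Inter>(C ` Lambda A)" by blast
  have e: "{} \<in> Lambda A" by (simp add: Lambda_def)
  have gP: "g \<in> PiE A S" using g e by (auto simp: C_def tP)
  have thread: "\<exists>w. z L w \<noteq> 0 \<and> restrict g L = w" if "L \<in> Lambda A" for L
  proof -
    have "g \<in> C L" using g that by blast
    then obtain w where w: "z L w \<noteq> 0" "\<forall>\<alpha>\<in>L. g \<alpha> = w \<alpha>" unfolding C_def by blast
    have "restrict g L = w" using w(2) extw[OF that w(1)] by (auto simp: restrict_def extensional_def fun_eq_iff)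
    then show ?thesis using w(1) by blast
  qed
  have gA: "\<forall>\<alpha>\<in>A. g \<alpha> \<in> \<alpha>" using gP subS by (auto simp: PiE_iff)
  have gF: "\<forall>L. finite L \<and> L \<noteq> {} \<and> L \<subseteq> A \<longrightarrow> \<Inter>(g ` L) \<noteq> {}"
  proof (intro allI impI)
    fix L assume L0: "finite L \<and> L \<noteq> {} \<and> L \<subseteq> A"
    then have L: "L \<in> Lambda A" by (simp add: Lambda_def)
    obtain w where w: "z L w \<noteq> 0" "restrict g L = w" using thread[OF L] by blast
    have "w \<in> Nverts X L" using cplxD(3)[OF Ninf_setD(1)[OF z L]] w(1) by blast
    then obtain q where "q \<in> wedge X L w" by (auto simp: Nverts_def)
    then have "q \<in> \<Inter>(g ` L)" using w(2) by (auto simp: wedge_iff)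
    then show "\<Inter>(g ` L) \<noteq> {}" by blast
  qed
  have "\<Inter>(g ` A) \<noteq> {}" using condII gA gF by meson
  then obtain y where y: "y \<in> \<Inter>(g ` A)" by blast
  have Ane: "A \<noteq> {}" using A_nonempty Ninf_topspace_ne[OF z] by blast
  then obtain \<alpha>0 where "\<alpha>0 \<in> A" by blast
  then have yX: "y \<in> topspace X" using y gA nc_sub by blast
  have "y \<in> wedge_pt X L (z L)" if L: "L \<in> Lambda A" for L
  proof (rule ccontr)
    assume "y \<notin> wedge_pt X L (z L)"
    then obtain v where v: "z L v \<noteq> 0" "y \<notin> wedge X L v" using yX by (auto simp: wedge_pt_iff)
    then obtain \<beta> where \<beta>: "\<beta> \<in> L" "y \<notin> v \<beta>" using yX by (auto simp: wedge_iff)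
    have vN: "v \<in> Nverts X L" using cplxD(3)[OF Ninf_setD(1)[OF z L]] v(1) by blast
    have \<beta>A: "\<beta> \<in> A" using \<beta> L by (auto simp: Lambda_def)
    have "v \<beta> \<in> \<beta>" using vN \<beta> by (auto simp: Nverts_def PiE_iff)
    then have "closedin X (v \<beta>)" using nc_closed[OF \<beta>A] by blast
    then have oU: "openin X (topspace X - v \<beta>)" by blast
    obtain \<gamma> where \<gamma>: "\<gamma> \<in> A" "\<forall>V\<in>\<gamma>. y \<in> V \<longrightarrow> V \<subseteq> topspace X - v \<beta>"
      using condI'[OF oU] yX \<beta>(2) by blast
    let ?M = "insert \<gamma> L"
    have M: "?M \<in> Lambda A" using L \<gamma> by (auto simp: Lambda_def)
    obtain u where u: "z ?M u \<noteq> 0" "restrict u L = v" using Ninf_lift[OF z L M _ v(1)] by auto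
    obtain w where w: "z ?M w \<noteq> 0" "restrict g ?M = w" using thread[OF M] by blast
    obtain q where q: "q \<in> topspace X" "\<forall>t. z ?M t \<noteq> 0 \<longrightarrow> q \<in> wedge X ?M t"
      using cplxD(6)[OF Ninf_setD(1)[OF z M]] by blast
    have "q \<in> u \<beta>" using q(2) u(1) \<beta>(1) by (auto simp: wedge_iff)
    moreover have "u \<beta> = v \<beta>" using u(2) \<beta>(1) by auto
    ultimately have q1: "q \<in> v \<beta>" by simp
    have "q \<in> w \<gamma>" using q(2) w(1) by (auto simp: wedge_iff)
    then have q2: "q \<in> g \<gamma>" using w(2) by auto
    have "y \<in> g \<gamma>" using y \<gamma>(1) by blast
    then have "g \<gamma> \<subseteq> topspace X - v \<beta>" using \<gamma> gA by blast
    then show False using q1 q2 by blast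
  qed
  then show ?thesis using yX by blast
qed

lemma piX_char:
  assumes z: "z \<in> Ninf_set X A"
  shows "piX X A z \<in> topspace X \<and> (\<forall>L\<in>Lambda A. piX X A z \<in> wedge_pt X L (z L))"
proof -
  obtain x where x: "x \<in> topspace X" "\<forall>L\<in>Lambda A. x \<in> wedge_pt X L (z L)" using piX_exists[OF z] by blast
  have "piX X A z = x"
    unfolding piX_def
  proof (rule the_equality)
    show "x \<in> topspace X \<and> (\<forall>L\<in>Lambda A. x \<in> wedge_pt X L (z L))" using x by blast
    show "\<And>y. y \<in> topspace X \<and> (\<forall>L\<in>Lambda A. y \<in> wedge_pt X L (z L)) \<Longrightarrow> y = x"
      using piX_unique[OF z] x by blast
  qed
  then show ?thesis using x by simp
qed

lemma piX_eq:
  assumes z: "z \<in> Ninf_set X A" and x: "x \<in> topspace X" "\<forall>L\<in>Lambda A. x \<in> wedge_pt X L (z L)"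
  shows "piX X A z = x"
  using piX_unique[OF z _ _ x] piX_char[OF z] by blast

lemma cont_coord: "L \<in> Lambda A \<Longrightarrow> continuous_map (Ninf X A) (Ncplx X L) (\<lambda>z. z L)"
  unfolding Ninf_def by (intro continuous_map_from_subtopology continuous_map_product_projection)

lemma piX_cont: "continuous_map (Ninf X A) X (piX X A)"
  unfolding continuous_map_def
proof (intro conjI allI impI)
  show "piX X A \<in> topspace (Ninf X A) \<rightarrow> topspace X" using piX_char by (auto simp: topspace_Ninf)
  fix U assume U: "openin X U"
  show "openin (Ninf X A) {z \<in> topspace (Ninf X A). piX X A z \<in> U}"
    unfolding openin_subopen[of _ "{z \<in> topspace (Ninf X A). piX X A z \<in> U}"]
  proof
    fix z0 assume z0: "z0 \<in> {z \<in> topspace (Ninf X A). piX X A z \<in> U}"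
    then have z0N: "z0 \<in> Ninf_set X A" by (simp add: topspace_Ninf)
    let ?x0 = "piX X A z0"
    obtain \<alpha> where \<alpha>: "\<alpha> \<in> A" "\<forall>V\<in>\<alpha>. ?x0 \<in> V \<longrightarrow> V \<subseteq> U" using condI'[OF U] z0 by blast
    let ?L = "{\<alpha>}"
    have L: "?L \<in> Lambda A" using \<alpha> by (simp add: Lambda_def)
    note c = cplxD[OF Ninf_setD(1)[OF z0N L]]
    let ?F = "{v. z0 ?L v \<noteq> 0}"
    let ?O = "{a \<in> cplx_points (NSimp X ?L). \<forall>v\<in>?F. 0 < a v}"
    have oO: "openin (Ncplx X ?L) ?O" by (rule openin_star[OF c(1)])
    let ?T = "{z \<in> topspace (Ninf X A). z ?L \<in> ?O}"
    have oT: "openin (Ninf X A) ?T" by (rule openin_continuous_map_preimage[OF cont_coord[OF L] oO])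
    have "z0 ?L \<in> ?O" using Ninf_setD(1)[OF z0N L] c(4) by (auto simp: less_le)
    then have z0T: "z0 \<in> ?T" using z0 by simp
    have "?T \<subseteq> {z \<in> topspace (Ninf X A). piX X A z \<in> U}"
    proof
      fix z assume z: "z \<in> ?T"
      then have zN: "z \<in> Ninf_set X A" by (simp add: topspace_Ninf)
      obtain v where v: "z0 ?L v \<noteq> 0" using c(2) by blast
      have "z ?L v > 0" using z v by auto
      then have "piX X A z \<in> wedge X ?L v" using piX_char[OF zN] L by (auto simp: wedge_pt_iff)
      then have p1: "piX X A z \<in> v \<alpha>" by (simp add: wedge_iff)
      have "?x0 \<in> wedge X ?L v" using piX_char[OF z0N] L v by (auto simp: wedge_pt_iff)
      then have p2: "?x0 \<in> v \<alpha>" by (simp add: wedge_iff)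
      have "v \<alpha> \<in> \<alpha>" using c(3) v by (auto simp: Nverts_def PiE_iff)
      then have "v \<alpha> \<subseteq> U" using \<alpha> p2 by blast
      then show "z \<in> {z \<in> topspace (Ninf X A). piX X A z \<in> U}" using p1 z by auto
    qed
    then show "\<exists>T. openin (Ninf X A) T \<and> z0 \<in> T \<and> T \<subseteq> {z \<in> topspace (Ninf X A). piX X A z \<in> U}"
      using oT z0T by blast
  qed
qed

end


lemma proj_closed_simplex:
  assumes S: "NSimp X M S" and LM: "L \<subseteq> M" and a: "a \<in> closed_simplex S"
  shows "proj_pt L a \<in> closed_simplex ((\<lambda>v. restrict v L) ` S)"
proof -
  have fS: "finite S" using S by (simp add: NSimp_def)
  have suppa: "{v. a v \<noteq> 0} \<subseteq> S" using a by (auto simp: closed_simplex_def)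
  have fa: "finite {v. a v \<noteq> 0}" using fS suppa by (rule finite_subset[rotated])
  have nn: "\<And>v. 0 \<le> a v" using a by (simp add: closed_simplex_def)
  have ac: "a \<in> cplx_points (NSimp X M)" using closed_simplex_sub[OF S] a by blast
  have pc: "proj_pt L a \<in> cplx_points (NSimp X L)" by (rule proj_cplx[OF LM ac])
  have supp: "{w. proj_pt L a w \<noteq> 0} \<subseteq> (\<lambda>v. restrict v L) ` S"
    using proj_supp[OF fa nn] suppa by auto
  have "sum (proj_pt L a) ((\<lambda>v. restrict v L) ` S) = sum (proj_pt L a) {w. proj_pt L a w \<noteq> 0}"
    using fS supp by (intro sum.mono_neutral_right) auto
  also have "\<dots> = 1" using cplxD(5)[OF pc] .
  finally show ?thesis using supp proj_nonneg[OF nn] by (auto simp: closed_simplex_def)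
qed

lemma NSimp_image:
  assumes S: "NSimp X M S" and LM: "L \<subseteq> M"
  shows "NSimp X L ((\<lambda>v. restrict v L) ` S)"
proof -
  obtain x where x: "x \<in> topspace X" "\<forall>v\<in>S. x \<in> wedge X M v" using S unfolding NSimp_def by blast
  have "x \<in> topspace X \<inter> \<Inter>(wedge X L ` (\<lambda>v. restrict v L) ` S)"
    using x wedge_restrict[OF LM] by blast
  then show ?thesis using S Nverts_restrict[OF LM] unfolding NSimp_def by blast
qed

lemma proj_cont:
  assumes LM: "L \<subseteq> M"
  shows "continuous_map (Ncplx X M) (Ncplx X L) (proj_pt L)"
  unfolding continuous_map_def
proof (intro conjI allI impI)
  show "proj_pt L \<in> topspace (Ncplx X M) \<rightarrow> topspace (Ncplx X L)"
    using proj_cplx[OF LM] by (auto simp: topspace_Ncplx)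
  fix U assume U: "openin (Ncplx X L) U"
  show "openin (Ncplx X M) {a \<in> topspace (Ncplx X M). proj_pt L a \<in> U}"
    unfolding openin_Ncplx
  proof (intro conjI allI impI)
    show "{a \<in> topspace (Ncplx X M). proj_pt L a \<in> U} \<subseteq> cplx_points (NSimp X M)"
      by (auto simp: topspace_Ncplx)
    fix S assume S: "NSimp X M S"
    have fS: "finite S" using S by (simp add: NSimp_def)
    let ?T = "subtopology (powertop_real UNIV) (closed_simplex S)"
    have cp: "continuous_map ?T (powertop_real UNIV) (proj_pt L)"
    proof -
      have "continuous_map ?T (powertop_real UNIV) (\<lambda>a w. sum a {v \<in> S. restrict v L = w})"
        unfolding continuous_map_componentwise_UNIV
        using fS by (auto intro!: continuous_map_sum continuous_map_from_subtopology continuous_map_product_projection)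
      moreover have "(\<lambda>w. sum a {v \<in> S. restrict v L = w}) = proj_pt L a" if a: "a \<in> topspace ?T" for a
      proof
        fix w
        have sa: "{v. a v \<noteq> 0} \<subseteq> S" using a by (auto simp: closed_simplex_def)
        show "sum a {v \<in> S. restrict v L = w} = proj_pt L a w" by (rule sym[OF proj_sum[OF fS sa]])
      qed
      ultimately show ?thesis by (rule continuous_map_eq)
    qed
    have c: "continuous_map ?T (Ncplx X L) (proj_pt L)"
      by (rule cont_into_Ncplx[OF NSimp_image[OF S LM] cp]) (use proj_closed_simplex[OF S LM] in auto)
    have "openin ?T {a \<in> topspace ?T. proj_pt L a \<in> U}"
      by (rule openin_continuous_map_preimage[OF c U])
    moreover have "{a \<in> topspace ?T. proj_pt L a \<in> U} = {a \<in> topspace (Ncplx X M). proj_pt L a \<in> U} \<inter> closed_simplex S"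
      using closed_simplex_sub[OF S] by (auto simp: topspace_Ncplx)
    ultimately show "openin ?T ({a \<in> topspace (Ncplx X M). proj_pt L a \<in> U} \<inter> closed_simplex S)" by simp
  qed
qed

lemma Ninf_set_closed: "closedin (product_topology (\<lambda>L. Ncplx X L) (Lambda A)) (Ninf_set X A)"
proof -
  let ?P = "product_topology (\<lambda>L. Ncplx X L) (Lambda A)"
  let ?Q = "{(L, M). L \<in> Lambda A \<and> M \<in> Lambda A \<and> L \<subseteq> M}"
  let ?E = "\<lambda>(L, M). {z \<in> topspace ?P. proj_pt L (z M) = z L}"
  have cE: "closedin ?P (?E q)" if "q \<in> ?Q" for q
  proof -
    obtain L M where q0: "q = (L, M)" by (cases q)
    then have q: "q = (L, M)" "L \<in> Lambda A" "M \<in> Lambda A" "L \<subseteq> M" using that by auto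
    have c1: "continuous_map ?P (Ncplx X L) (\<lambda>z. proj_pt L (z M))"
      using continuous_map_compose[OF continuous_map_product_projection[of M "Lambda A" "\<lambda>L. Ncplx X L", OF q(3)] proj_cont[OF q(4)]]
      by (simp add: o_def)
    have c2: "continuous_map ?P (Ncplx X L) (\<lambda>z. z L)" by (rule continuous_map_product_projection[OF q(2)])
    show ?thesis using closedin_continuous_maps_eq[OF Hausdorff_Ncplx c1 c2] q(1) by simp
  qed
  have ne: "?E ` ?Q \<noteq> {}" by (auto simp: Lambda_def)
  have "Ninf_set X A = \<Inter>(?E ` ?Q)"
    using ne by (auto simp: Ninf_set_def)
  then show ?thesis using ne cE by (auto intro!: closedin_Inter)
qed

context thm_setting begin

definition Bx :: "'a set set set \<Rightarrow> 'a \<Rightarrow> 'a vert set" where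
  "Bx L x = {v \<in> Nverts X L. x \<in> wedge X L v}"

lemma p_inf_Ninf:
  assumes x: "x \<in> topspace X"
  shows "p_inf X A \<phi> x \<in> Ninf_set X A"
  unfolding Ninf_set_def p_inf_def
  using p_lam_cplx[OF _ _ x] p_lam_compat[OF _ _ _ x]
  by (auto simp: PiE_iff topspace_Ncplx Lambda_def)

lemma p_lam_Bx:
  assumes "L \<in> Lambda A" "x \<in> topspace X" "p_lam X \<phi> L x v \<noteq> 0"
  shows "v \<in> Bx L x"
  using assms p_lam_wedge[of L x v] cplxD(3)[OF p_lam_cplx[of L x]] by (auto simp: Bx_def Lambda_def)

lemma piX_p_inf:
  assumes x: "x \<in> topspace X"
  shows "piX X A (p_inf X A \<phi> x) = x"
proof (rule piX_eq[OF p_inf_Ninf[OF x] x])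
  show "\<forall>L\<in>Lambda A. x \<in> wedge_pt X L (p_inf X A \<phi> x L)"
    using p_lam_wedge[OF _ _ x] x by (auto simp: p_inf_def wedge_pt_iff Lambda_def)
qed

lemma Bx_NSimp:
  assumes L: "L \<in> Lambda A" and x: "x \<in> topspace X"
  shows "NSimp X L (Bx L x)"
proof -
  have LA: "L \<subseteq> A" "finite L" using L by (auto simp: Lambda_def)
  have "Bx L x \<subseteq> PiE L (\<lambda>\<alpha>. {V\<in>\<alpha>. x \<in> V})"
  proof
    fix v assume "v \<in> Bx L x"
    then have v1: "v \<in> PiE L (\<lambda>\<alpha>. \<alpha>)" "x \<in> wedge X L v" by (auto simp: Bx_def Nverts_def)
    then show "v \<in> PiE L (\<lambda>\<alpha>. {V\<in>\<alpha>. x \<in> V})" unfolding PiE_iff wedge_iff by blast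
  qed
  moreover have "finite (PiE L (\<lambda>\<alpha>. {V\<in>\<alpha>. x \<in> V}))"
    using LA nc_fin[OF _ x] by (intro finite_PiE) auto
  ultimately have f: "finite (Bx L x)" by (rule finite_subset)
  obtain v where "p_lam X \<phi> L x v \<noteq> 0" using cplxD(2)[OF p_lam_cplx[OF LA(1,2) x]] by blast
  then have ne: "Bx L x \<noteq> {}" using p_lam_Bx[OF L x] by blast
  have "x \<in> topspace X \<inter> \<Inter>(wedge X L ` Bx L x)" using x by (auto simp: Bx_def)
  then show ?thesis using f ne unfolding NSimp_def by (auto simp: Bx_def)
qed

lemma fiber_sub:
  assumes z: "z \<in> Ninf_set X A" and L: "L \<in> Lambda A" and x: "x \<in> topspace X"
    and zx: "x \<in> wedge_pt X L (z L)"
  shows "z L \<in> closed_simplex (Bx L x)"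
proof -
  note c = cplxD[OF Ninf_setD(1)[OF z L]]
  have sub: "{v. z L v \<noteq> 0} \<subseteq> Bx L x" using c(3) zx by (auto simp: Bx_def wedge_pt_iff)
  have f: "finite (Bx L x)" using Bx_NSimp[OF L x] by (simp add: NSimp_def)
  have "sum (z L) (Bx L x) = sum (z L) {v. z L v \<noteq> 0}"
    using f sub by (intro sum.mono_neutral_right) auto
  then show ?thesis using c(4,5) sub by (auto simp: closed_simplex_def)
qed

lemma fiber_compact:
  assumes x: "x \<in> topspace X"
  shows "compactin (Ninf X A) {z \<in> topspace (Ninf X A). piX X A z = x}"
proof -
  let ?P = "product_topology (\<lambda>L. Ncplx X L) (Lambda A)"
  let ?K = "PiE (Lambda A) (\<lambda>L. closed_simplex (Bx L x))"
  let ?F = "{z \<in> topspace (Ninf X A). piX X A z = x}"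
  have cK: "compactin ?P ?K"
    using compactin_Ncplx_simplex[OF Bx_NSimp[OF _ x]] by (subst compactin_PiE) auto
  have cK2: "compactin ?P (Ninf_set X A \<inter> ?K)" by (rule closed_Int_compactin[OF Ninf_set_closed cK])
  have cK3: "compactin (Ninf X A) (Ninf_set X A \<inter> ?K)"
    unfolding Ninf_def compactin_subtopology using cK2 by simp
  have sub: "?F \<subseteq> Ninf_set X A \<inter> ?K"
  proof
    fix z assume "z \<in> ?F"
    then have z: "z \<in> Ninf_set X A" "piX X A z = x" by (auto simp: topspace_Ninf)
    have "z L \<in> closed_simplex (Bx L x)" if "L \<in> Lambda A" for L
      using fiber_sub[OF z(1) that x] piX_char[OF z(1)] z(2) that by auto
    then show "z \<in> Ninf_set X A \<inter> ?K" using z Ninf_setD(3)[OF z(1)] by (auto simp: PiE_iff)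
  qed
  have t1: "t1_space X" using Haus by (rule Hausdorff_imp_t1_space)
  have cx: "closedin X {x}" using t1 x unfolding t1_space_closedin_singleton by simp
  have "closedin (Ninf X A) {z \<in> topspace (Ninf X A). piX X A z \<in> {x}}"
    by (rule closedin_continuous_map_preimage[OF piX_cont cx])
  then have "closedin (Ninf X A) ?F" by simp
  then show ?thesis using closed_compactin[OF cK3 sub] by simp
qed

end


lemma continuous_map_local:
  assumes fim: "f \<in> topspace T \<rightarrow> topspace Y"
    and loc: "\<And>p. p \<in> topspace T \<Longrightarrow> \<exists>Q. openin T Q \<and> p \<in> Q \<and> continuous_map (subtopology T Q) Y f"
  shows "continuous_map T Y f"
  unfolding continuous_map_def
proof (intro conjI allI impI fim)
  fix U assume U: "openin Y U"
  show "openin T {p \<in> topspace T. f p \<in> U}"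
    unfolding openin_subopen[of T "{p \<in> topspace T. f p \<in> U}"]
  proof
    fix p assume p: "p \<in> {p \<in> topspace T. f p \<in> U}"
    obtain Q where Q: "openin T Q" "p \<in> Q" "continuous_map (subtopology T Q) Y f" using loc p by blast
    have "openin (subtopology T Q) {q \<in> topspace (subtopology T Q). f q \<in> U}"
      by (rule openin_continuous_map_preimage[OF Q(3) U])
    then have o: "openin T {q \<in> topspace (subtopology T Q). f q \<in> U}" using Q(1) by (rule openin_trans_full)
    show "\<exists>S. openin T S \<and> p \<in> S \<and> S \<subseteq> {p \<in> topspace T. f p \<in> U}"
      using o p Q(2) by (intro exI[of _ "{q \<in> topspace (subtopology T Q). f q \<in> U}"]) auto
  qed
qed

lemma cplx_in_simplex:
  assumes a: "a \<in> cplx_points Simp" and B: "finite B" "{v. a v \<noteq> 0} \<subseteq> B"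
  shows "a \<in> closed_simplex B"
proof -
  have "sum a B = sum a {v. a v \<noteq> 0}" using B by (intro sum.mono_neutral_right) auto
  then show ?thesis using a B(2) by (auto simp: closed_simplex_def cplx_points_def)
qed

lemma convex_cplx:
  assumes a: "a \<in> cplx_points (NSimp X L)" and b: "b \<in> cplx_points (NSimp X L)"
    and t: "0 \<le> t" "t \<le> 1" and x: "x \<in> topspace X"
    and xa: "\<And>v. a v \<noteq> 0 \<Longrightarrow> x \<in> wedge X L v" and xb: "\<And>v. b v \<noteq> 0 \<Longrightarrow> x \<in> wedge X L v"
  shows "(\<lambda>v. (1 - t) * a v + t * b v) \<in> cplx_points (NSimp X L)"
proof -
  note A = cplxD[OF a] and B = cplxD[OF b]
  let ?c = "\<lambda>v. (1 - t) * a v + t * b v"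
  let ?T = "{v. a v \<noteq> 0} \<union> {v. b v \<noteq> 0}"
  have fT: "finite ?T" using A(1) B(1) by simp
  have sub: "{v. ?c v \<noteq> 0} \<subseteq> ?T" by auto
  have nn: "0 \<le> ?c v" for v using A(4) B(4) t by (intro add_nonneg_nonneg mult_nonneg_nonneg) auto
  have sa: "sum a ?T = 1" using A(5) fT by (subst sum.mono_neutral_right[of ?T "{v. a v \<noteq> 0}"]) auto
  have sb: "sum b ?T = 1" using B(5) fT by (subst sum.mono_neutral_right[of ?T "{v. b v \<noteq> 0}"]) auto
  have "sum ?c {v. ?c v \<noteq> 0} = sum ?c ?T" using fT sub by (intro sum.mono_neutral_left) auto
  also have "\<dots> = (1 - t) * sum a ?T + t * sum b ?T" by (simp add: sum.distrib sum_distrib_left)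
  finally have s1: "sum ?c {v. ?c v \<noteq> 0} = 1" using sa sb by simp
  have ne: "{v. ?c v \<noteq> 0} \<noteq> {}"
  proof
    assume "{v. ?c v \<noteq> 0} = {}"
    then have "sum ?c {v. ?c v \<noteq> 0} = 0" by (simp only: sum.empty)
    with s1 show False by simp
  qed
  have "NSimp X L {v. ?c v \<noteq> 0}"
    unfolding NSimp_def
  proof (intro conjI ne)
    show "finite {v. ?c v \<noteq> 0}" using fT sub by (rule finite_subset[rotated])
    show "{v. ?c v \<noteq> 0} \<subseteq> Nverts X L" using sub A(3) B(3) by blast
    have "x \<in> topspace X \<inter> \<Inter>(wedge X L ` {v. ?c v \<noteq> 0})" using x xa xb sub by blast
    then show "topspace X \<inter> \<Inter>(wedge X L ` {v. ?c v \<noteq> 0}) \<noteq> {}" by blast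
  qed
  then show ?thesis using s1 nn by (simp add: cplx_points_def)
qed

context thm_setting begin

definition Hmap :: "('a set set set \<Rightarrow> 'a pt) \<times> real \<Rightarrow> ('a set set set \<Rightarrow> 'a pt)" where
  "Hmap = (\<lambda>(z, t). restrict (\<lambda>L. \<lambda>v. (1 - t) * z L v + t * p_lam X \<phi> L (piX X A z) v) (Lambda A))"

lemma H_Ninf:
  assumes z: "z \<in> Ninf_set X A" and t: "0 \<le> t" "t \<le> 1"
  shows "Hmap (z, t) \<in> Ninf_set X A" "piX X A (Hmap (z, t)) = piX X A z"
proof -
  let ?x = "piX X A z"
  have x: "?x \<in> topspace X" "\<forall>L\<in>Lambda A. ?x \<in> wedge_pt X L (z L)" using piX_char[OF z] by auto
  have LA: "L \<subseteq> A" "finite L" if "L \<in> Lambda A" for L using that by (auto simp: Lambda_def)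
  have c: "(\<lambda>v. (1 - t) * z L v + t * p_lam X \<phi> L ?x v) \<in> cplx_points (NSimp X L)" if L: "L \<in> Lambda A" for L
    using convex_cplx[OF Ninf_setD(1)[OF z L] p_lam_cplx[OF LA[OF L] x(1)] t x(1)]
      x(2) L p_lam_wedge[OF LA[OF L] x(1)] by (auto simp: wedge_pt_iff)
  have compat: "proj_pt L (\<lambda>v. (1 - t) * z M v + t * p_lam X \<phi> M ?x v) = (\<lambda>v. (1 - t) * z L v + t * p_lam X \<phi> L ?x v)"
    if L: "L \<in> Lambda A" and M: "M \<in> Lambda A" and LM: "L \<subseteq> M" for L M
  proof
    fix w
    have f1: "finite {v. z M v \<noteq> 0}" using cplxD(1)[OF Ninf_setD(1)[OF z M]] .
    have f2: "finite {v. p_lam X \<phi> M ?x v \<noteq> 0}" using cplxD(1)[OF p_lam_cplx[OF LA[OF M] x(1)]] .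
    show "proj_pt L (\<lambda>v. (1 - t) * z M v + t * p_lam X \<phi> M ?x v) w = (1 - t) * z L w + t * p_lam X \<phi> L ?x w"
      using proj_lin[OF f1 f2, of L "1 - t" t w] Ninf_setD(2)[OF z L M LM] p_lam_compat[OF LA[OF M] LM x(1)] by simp
  qed
  show H: "Hmap (z, t) \<in> Ninf_set X A"
    unfolding Ninf_set_def Hmap_def using c compat by (auto simp: PiE_iff topspace_Ncplx)
  have "?x \<in> wedge_pt X L (Hmap (z, t) L)" if L: "L \<in> Lambda A" for L
  proof -
    have "?x \<in> wedge X L v" if "(1 - t) * z L v + t * p_lam X \<phi> L ?x v \<noteq> 0" for v
    proof (cases "z L v = 0")
      case True
      then have "p_lam X \<phi> L ?x v \<noteq> 0" using that by auto
      then show ?thesis using p_lam_wedge[OF LA[OF L] x(1)] by blast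
    next
      case False
      then show ?thesis using x(2) L by (auto simp: wedge_pt_iff)
    qed
    then show ?thesis using x(1) L by (auto simp: wedge_pt_iff Hmap_def)
  qed
  then show "piX X A (Hmap (z, t)) = ?x" using piX_eq[OF H x(1)] by blast
qed

lemma H_0: "z \<in> Ninf_set X A \<Longrightarrow> Hmap (z, 0) = z"
  using Ninf_setD(3)[of z X A] by (auto simp: Hmap_def fun_eq_iff restrict_def extensional_def)

lemma H_1: "Hmap (z, 1) = p_inf X A \<phi> (piX X A z)"
  by (simp add: Hmap_def p_inf_def)

end


context thm_setting begin

definition fL :: "'a set set set \<Rightarrow> ('a set set set \<Rightarrow> 'a pt) \<times> real \<Rightarrow> 'a pt" where
  "fL L p = (\<lambda>v. (1 - snd p) * fst p L v + snd p * p_lam X \<phi> L (piX X A (fst p)) v)"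

lemma Hmap_fL: "L \<in> Lambda A \<Longrightarrow> Hmap p L = fL L p"
  by (cases p) (simp add: Hmap_def fL_def)

lemma fL_supp:
  assumes z: "z \<in> Ninf_set X A" and L: "L \<in> Lambda A" and nz: "fL L (z, t) v \<noteq> 0"
  shows "v \<in> Nverts X L" "piX X A z \<in> wedge X L v"
proof -
  have LA: "L \<subseteq> A" "finite L" using L by (auto simp: Lambda_def)
  let ?x = "piX X A z"
  have x: "?x \<in> topspace X" "\<forall>L\<in>Lambda A. ?x \<in> wedge_pt X L (z L)" using piX_char[OF z] by auto
  have "v \<in> Nverts X L \<and> ?x \<in> wedge X L v"
  proof (cases "z L v = 0")
    case True
    then have "p_lam X \<phi> L ?x v \<noteq> 0" using nz by (auto simp: fL_def)
    then show ?thesis using p_lam_wedge[OF LA x(1)] cplxD(3)[OF p_lam_cplx[OF LA x(1)]] by blast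
  next
    case False
    then show ?thesis using x(2) L cplxD(3)[OF Ninf_setD(1)[OF z L]] by (auto simp: wedge_pt_iff)
  qed
  then show "v \<in> Nverts X L" "piX X A z \<in> wedge X L v" by auto
qed

lemma fL_cont_powertop:
  assumes L: "L \<in> Lambda A"
  shows "continuous_map (prod_topology (Ninf X A) (top_of_set {0..1::real})) (powertop_real UNIV) (fL L)"
  unfolding continuous_map_componentwise_UNIV fL_def
proof
  fix v
  let ?T = "prod_topology (Ninf X A) (top_of_set {0..1::real})"
  have LA: "L \<subseteq> A" "finite L" using L by (auto simp: Lambda_def)
  have cs: "continuous_map ?T euclideanreal snd"
    by (rule continuous_map_into_fulltopology[OF continuous_map_snd])
  have cf: "continuous_map ?T (Ninf X A) fst" by (rule continuous_map_fst)
  have cz: "continuous_map ?T euclideanreal (\<lambda>p. fst p L v)"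
  proof -
    have "continuous_map ?T (Ncplx X L) (\<lambda>p. fst p L)"
      using continuous_map_compose[OF cf cont_coord[OF L]] by (simp add: o_def)
    then have "continuous_map ?T (powertop_real UNIV) (\<lambda>p. fst p L)"
      using continuous_map_compose[OF _ cont_Ncplx_id] by (simp add: o_def)
    then show ?thesis
      using continuous_map_compose[OF _ continuous_map_product_projection[of v UNIV "\<lambda>_. euclideanreal"]]
      by (simp add: o_def)
  qed
  have cpi: "continuous_map ?T X (\<lambda>p. piX X A (fst p))"
    using continuous_map_compose[OF cf piX_cont] by (simp add: o_def)
  have cp: "continuous_map ?T euclideanreal (\<lambda>p. p_lam X \<phi> L (piX X A (fst p)) v)"
  proof (cases "v \<in> Nverts X L")
    case True
    have "continuous_map ?T euclideanreal (\<lambda>p. \<Prod>\<alpha>\<in>L. \<phi> \<alpha> (v \<alpha>) (piX X A (fst p)))"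
    proof (rule continuous_map_prod[OF LA(2)])
      fix \<alpha> assume \<alpha>: "\<alpha> \<in> L"
      have "v \<alpha> \<in> \<alpha>" using True \<alpha> by (auto simp: Nverts_def PiE_iff)
      then have "continuous_map X euclideanreal (\<phi> \<alpha> (v \<alpha>))" using nc_cont \<alpha> LA by blast
      then show "continuous_map ?T euclideanreal (\<lambda>p. \<phi> \<alpha> (v \<alpha>) (piX X A (fst p)))"
        using continuous_map_compose[OF cpi] by (simp add: o_def)
    qed
    then show ?thesis using True by (simp add: p_lam_def)
  next
    case False
    then show ?thesis by (simp add: p_lam_def)
  qed
  show "continuous_map ?T euclideanreal (\<lambda>p. (1 - snd p) * fst p L v + snd p * p_lam X \<phi> L (piX X A (fst p)) v)"
    by (intro continuous_map_add continuous_map_real_mult continuous_map_diff cs cz cp) simp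
qed

lemma H_cont: "continuous_map (prod_topology (Ninf X A) (top_of_set {0..1::real})) (Ninf X A) Hmap"
proof -
  let ?T = "prod_topology (Ninf X A) (top_of_set {0..1::real})"
  have tT: "topspace ?T = Ninf_set X A \<times> {0..1}" by (simp add: topspace_Ninf)
  have im: "Hmap \<in> topspace ?T \<rightarrow> Ninf_set X A" using H_Ninf(1) tT by auto
  have ext: "Hmap ` topspace ?T \<subseteq> extensional (Lambda A)" by (auto simp: Hmap_def)
  have coord: "continuous_map ?T (Ncplx X L) (\<lambda>p. Hmap p L)" if L: "L \<in> Lambda A" for L
  proof -
    have LA: "L \<subseteq> A" "finite L" using L by (auto simp: Lambda_def)
    have "continuous_map ?T (Ncplx X L) (fL L)"
    proof (rule continuous_map_local)
      show "fL L \<in> topspace ?T \<rightarrow> topspace (Ncplx X L)"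
      proof
        fix p assume "p \<in> topspace ?T"
        then obtain z t where pz: "p = (z, t)" "z \<in> Ninf_set X A" "0 \<le> t" "t \<le> 1" using tT by auto
        have "Hmap (z, t) L \<in> cplx_points (NSimp X L)" by (rule Ninf_setD(1)[OF H_Ninf(1)[OF pz(2-4)] L])
        then show "fL L p \<in> topspace (Ncplx X L)" using Hmap_fL[OF L, of p] pz(1) by (simp add: topspace_Ncplx)
      qed
      fix p assume p: "p \<in> topspace ?T"
      obtain z0 t0 where p0: "p = (z0, t0)" "z0 \<in> Ninf_set X A" "t0 \<in> {0..1}" using p tT by auto
      let ?x0 = "piX X A z0"
      have x0: "?x0 \<in> topspace X" using piX_char[OF p0(2)] by blast
      obtain W where W: "openin X W" "?x0 \<in> W" "\<forall>y\<in>W. \<forall>\<alpha>\<in>L. \<forall>V\<in>\<alpha>. y \<in> V \<longrightarrow> ?x0 \<in> V"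
        using nc_locfin_L[OF LA(2,1) x0] by blast
      let ?Q = "{z \<in> topspace (Ninf X A). piX X A z \<in> W} \<times> {0..1::real}"
      have oQ: "openin ?T ?Q"
        using openin_continuous_map_preimage[OF piX_cont W(1)]
        by (simp add: openin_prod_Times_iff)
      have pQ: "p \<in> ?Q" using p0 W(2) by (auto simp: topspace_Ninf)
      have cQ: "continuous_map (subtopology ?T ?Q) (Ncplx X L) (fL L)"
      proof (rule cont_into_Ncplx[OF Bx_NSimp[OF L x0]])
        show "continuous_map (subtopology ?T ?Q) (powertop_real UNIV) (fL L)"
          by (rule continuous_map_from_subtopology[OF fL_cont_powertop[OF L]])
        fix q assume q: "q \<in> topspace (subtopology ?T ?Q)"
        then obtain z t where q0: "q = (z, t)" "z \<in> Ninf_set X A" "t \<in> {0..1}" "piX X A z \<in> W"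
          by (auto simp: topspace_Ninf)
        have t01: "0 \<le> t" "t \<le> 1" using q0(3) by auto
        have "Hmap (z, t) L \<in> cplx_points (NSimp X L)" by (rule Ninf_setD(1)[OF H_Ninf(1)[OF q0(2) t01] L])
        then have c: "fL L q \<in> cplx_points (NSimp X L)" using Hmap_fL[OF L, of q] q0(1) by simp
        have sub: "{v. fL L q v \<noteq> 0} \<subseteq> Bx L ?x0"
        proof
          fix v assume "v \<in> {v. fL L q v \<noteq> 0}"
          then have nz: "fL L (z, t) v \<noteq> 0" using q0(1) by simp
          have vN: "v \<in> Nverts X L" and yw: "piX X A z \<in> wedge X L v" using fL_supp[OF q0(2) L nz] by auto
          have "?x0 \<in> v \<alpha>" if "\<alpha> \<in> L" for \<alpha>
          proof -
            have "v \<alpha> \<in> \<alpha>" using vN that by (auto simp: Nverts_def PiE_iff)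
            moreover have "piX X A z \<in> v \<alpha>" using yw that by (simp add: wedge_iff)
            ultimately show ?thesis using W(3) q0(4) that by blast
          qed
          then have "?x0 \<in> wedge X L v" using x0 by (simp add: wedge_iff)
          then show "v \<in> Bx L ?x0" using vN by (simp add: Bx_def)
        qed
        have fB: "finite (Bx L ?x0)" using Bx_NSimp[OF L x0] by (simp add: NSimp_def)
        show "fL L q \<in> closed_simplex (Bx L ?x0)" by (rule cplx_in_simplex[OF c fB sub])
      qed
      show "\<exists>Q. openin ?T Q \<and> p \<in> Q \<and> continuous_map (subtopology ?T Q) (Ncplx X L) (fL L)"
        using oQ pQ cQ by blast
    qed
    then show ?thesis by (rule continuous_map_eq) (simp add: Hmap_fL[OF L])
  qed
  have pc: "continuous_map ?T (product_topology (\<lambda>L. Ncplx X L) (Lambda A)) Hmap"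
    using ext coord by (simp add: continuous_map_componentwise)
  then have "continuous_map ?T (subtopology (product_topology (\<lambda>L. Ncplx X L) (Lambda A)) (Ninf_set X A)) Hmap"
    using im by (simp add: continuous_map_in_subtopology)
  then show ?thesis by (metis Ninf_def)
qed

end


context thm_setting begin

lemma section_exists:
  assumes L0: "L0 \<in> Lambda A" and x: "x \<in> topspace X" and a: "a \<in> cplx_points (NSimp X L0)"
    and ax: "\<forall>v. a v \<noteq> 0 \<longrightarrow> x \<in> wedge X L0 v"
  shows "\<exists>s\<in>Ninf_set X A. s L0 = a \<and> piX X A s = x"
proof -
  note ca = cplxD[OF a]
  have L0A: "L0 \<subseteq> A" "finite L0" using L0 by (auto simp: Lambda_def)
  have GA: "GA L0 a x"
    unfolding GA_def
  proof (intro conjI x allI impI)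
    fix w assume w: "a w \<noteq> 0"
    have "w \<in> Nverts X L0" using ca(3) w by blast
    then show "w \<in> PiE L0 (\<lambda>\<alpha>. \<alpha>)" by (simp add: Nverts_def)
    show "\<forall>\<alpha>\<in>L0. x \<in> w \<alpha>" using ax w by (simp add: wedge_iff)
  qed
  define s where "s = restrict (\<lambda>N. proj_pt N (Gf L0 a x (N \<union> L0))) (Lambda A)"
  have NL: "N \<union> L0 \<subseteq> A" "finite (N \<union> L0)" if "N \<in> Lambda A" for N using that L0A by (auto simp: Lambda_def)
  have Gc: "Gf L0 a x (N \<union> L0) \<in> cplx_points (NSimp X (N \<union> L0))" if "N \<in> Lambda A" for N
    by (rule G_cplx[OF NL[OF that] _ GA ca(4) ca(1) ca(5)]) auto
  have fG: "finite {v. Gf L0 a x (N \<union> L0) v \<noteq> 0}" if "N \<in> Lambda A" for N using cplxD(1)[OF Gc[OF that]] .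
  have sN: "s N \<in> cplx_points (NSimp X N)" if "N \<in> Lambda A" for N
    using proj_cplx[OF _ Gc[OF that]] that by (auto simp: s_def)
  have compat: "proj_pt N (s M) = s N" if N: "N \<in> Lambda A" and M: "M \<in> Lambda A" and NM: "N \<subseteq> M" for N M
  proof -
    have "proj_pt N (s M) = proj_pt N (proj_pt M (Gf L0 a x (M \<union> L0)))" using M by (simp add: s_def)
    also have "\<dots> = proj_pt N (Gf L0 a x (M \<union> L0))" by (rule proj_proj[OF NM fG[OF M]])
    also have "\<dots> = proj_pt N (proj_pt (N \<union> L0) (Gf L0 a x (M \<union> L0)))"
      by (rule proj_proj[OF _ fG[OF M], symmetric]) auto
    also have "proj_pt (N \<union> L0) (Gf L0 a x (M \<union> L0)) = Gf L0 a x (N \<union> L0)"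
      by (rule G2[OF NL[OF M] _ _ GA]) (use NM in auto)
    also have "proj_pt N (Gf L0 a x (N \<union> L0)) = s N" using N by (simp add: s_def)
    finally show ?thesis .
  qed
  have sinf: "s \<in> Ninf_set X A"
    unfolding Ninf_set_def using sN compat by (auto simp: PiE_iff topspace_Ncplx s_def)
  have "s L0 = proj_pt L0 (Gf L0 a x L0)" using L0 by (simp add: s_def)
  also have "\<dots> = a" unfolding G0[OF GA]
    by (rule proj_self) (use GA in \<open>auto simp: GA_def PiE_iff\<close>)
  finally have sL0: "s L0 = a" .
  have "x \<in> wedge_pt X N (s N)" if N: "N \<in> Lambda A" for N
  proof -
    have "x \<in> wedge X N w" if w: "s N w \<noteq> 0" for w
    proof -
      have "proj_pt N (Gf L0 a x (N \<union> L0)) w \<noteq> 0" using w N by (simp add: s_def)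
      then obtain v where v: "Gf L0 a x (N \<union> L0) v \<noteq> 0" "restrict v N = w" using proj_nz by blast
      have "x \<in> wedge X (N \<union> L0) v" using G1_wedge(1)[OF NL(1)[OF N] _ GA v(1) NL(2)[OF N]] by auto
      then show ?thesis using wedge_restrict[of N "N \<union> L0" x X v] v(2) by auto
    qed
    then show ?thesis using x by (auto simp: wedge_pt_iff)
  qed
  then have "piX X A s = x" using piX_eq[OF sinf x] by blast
  then show ?thesis using sinf sL0 by blast
qed

lemma piX_closed: "closed_map (Ninf X A) X (piX X A)"
  unfolding closed_map_fibre_neighbourhood
proof (intro conjI allI impI)
  show "piX X A \<in> topspace (Ninf X A) \<rightarrow> topspace X" using piX_char by (auto simp: topspace_Ninf)
  fix U y
  assume asm: "openin (Ninf X A) U \<and> y \<in> topspace X \<and> {x \<in> topspace (Ninf X A). piX X A x = y} \<subseteq> U"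
  then have U: "openin (Ninf X A) U" and y: "y \<in> topspace X"
    and FU: "{x \<in> topspace (Ninf X A). piX X A x = y} \<subseteq> U" by auto
  let ?P = "product_topology (\<lambda>L. Ncplx X L) (Lambda A)"
  let ?F = "{x \<in> topspace (Ninf X A). piX X A x = y}"
  obtain U' where U': "openin ?P U'" "U = U' \<inter> Ninf_set X A"
    using U unfolding Ninf_def openin_subtopology by blast
  have "\<forall>z\<in>?F. \<exists>W. finite {L \<in> Lambda A. W L \<noteq> topspace (Ncplx X L)} \<and>
      (\<forall>L\<in>Lambda A. openin (Ncplx X L) (W L)) \<and> z \<in> PiE (Lambda A) W \<and> PiE (Lambda A) W \<subseteq> U'"
  proof
    fix z assume "z \<in> ?F"
    then have "z \<in> U'" using FU U'(2) by blast
    then show "\<exists>W. finite {L \<in> Lambda A. W L \<noteq> topspace (Ncplx X L)} \<and>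
      (\<forall>L\<in>Lambda A. openin (Ncplx X L) (W L)) \<and> z \<in> PiE (Lambda A) W \<and> PiE (Lambda A) W \<subseteq> U'"
      using U'(1) unfolding openin_product_topology_alt by blast
  qed
  then have "\<exists>Wf. \<forall>z\<in>?F. finite {L \<in> Lambda A. Wf z L \<noteq> topspace (Ncplx X L)} \<and>
      (\<forall>L\<in>Lambda A. openin (Ncplx X L) (Wf z L)) \<and> z \<in> PiE (Lambda A) (Wf z) \<and> PiE (Lambda A) (Wf z) \<subseteq> U'"
    by (rule bchoice)
  then obtain Wf where Wf0: "\<forall>z\<in>?F. finite {L \<in> Lambda A. Wf z L \<noteq> topspace (Ncplx X L)} \<and>
      (\<forall>L\<in>Lambda A. openin (Ncplx X L) (Wf z L)) \<and> z \<in> PiE (Lambda A) (Wf z) \<and> PiE (Lambda A) (Wf z) \<subseteq> U'"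
    by (elim exE)
  have Wf: "\<And>z. z \<in> ?F \<Longrightarrow> finite {L \<in> Lambda A. Wf z L \<noteq> topspace (Ncplx X L)}"
    "\<And>z L. z \<in> ?F \<Longrightarrow> L \<in> Lambda A \<Longrightarrow> openin (Ncplx X L) (Wf z L)"
    "\<And>z. z \<in> ?F \<Longrightarrow> z \<in> PiE (Lambda A) (Wf z)" "\<And>z. z \<in> ?F \<Longrightarrow> PiE (Lambda A) (Wf z) \<subseteq> U'"
    using Wf0 by blast+
  let ?U = "(\<lambda>z. PiE (Lambda A) (Wf z) \<inter> Ninf_set X A) ` ?F"
  have oU: "openin (Ninf X A) D" if D: "D \<in> ?U" for D
  proof -
    obtain z where z: "z \<in> ?F" "D = PiE (Lambda A) (Wf z) \<inter> Ninf_set X A" using D by blast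
    have "openin ?P (PiE (Lambda A) (Wf z))" using Wf(1,2)[OF z(1)] by (simp add: openin_PiE_gen)
    then show ?thesis using z(2) unfolding Ninf_def openin_subtopology by blast
  qed
  have covU: "?F \<subseteq> \<Union>?U" using Wf(3) by (auto simp: topspace_Ninf)
  have cmp: "\<forall>\<U>. (\<forall>D\<in>\<U>. openin (Ninf X A) D) \<and> ?F \<subseteq> \<Union>\<U> \<longrightarrow> (\<exists>\<F>. finite \<F> \<and> \<F> \<subseteq> \<U> \<and> ?F \<subseteq> \<Union>\<F>)"
    using fiber_compact[OF y] unfolding compactin_def by blast
  have "\<exists>\<F>. finite \<F> \<and> \<F> \<subseteq> ?U \<and> ?F \<subseteq> \<Union>\<F>"
    using cmp[rule_format, OF conjI[OF ballI[OF oU] covU]] .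
  then obtain \<F> where \<F>: "finite \<F>" "\<F> \<subseteq> ?U" "?F \<subseteq> \<Union>\<F>" by blast
  obtain Zs where Zs: "Zs \<subseteq> ?F" "finite Zs" "\<F> = (\<lambda>z. PiE (Lambda A) (Wf z) \<inter> Ninf_set X A) ` Zs"
    using \<F>(1,2) by (meson finite_subset_image)
  define L0 where "L0 = \<Union>(\<Union>z\<in>Zs. {L \<in> Lambda A. Wf z L \<noteq> topspace (Ncplx X L)})"
  have L0: "L0 \<in> Lambda A"
  proof -
    let ?M = "\<Union>z\<in>Zs. {L \<in> Lambda A. Wf z L \<noteq> topspace (Ncplx X L)}"
    have fM: "finite ?M" using Zs Wf(1) by auto
    have fe: "\<And>L. L \<in> ?M \<Longrightarrow> finite L" and sA: "\<And>L. L \<in> ?M \<Longrightarrow> L \<subseteq> A"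
      by (auto simp: Lambda_def)
    have "finite L0" unfolding L0_def using fM fe by (rule finite_Union)
    moreover have "L0 \<subseteq> A" unfolding L0_def using sA by blast
    ultimately show ?thesis by (simp add: Lambda_def)
  qed
  have L0A: "L0 \<subseteq> A" "finite L0" using L0 by (auto simp: Lambda_def)
  obtain W where W: "openin X W" "y \<in> W" "\<forall>y'\<in>W. \<forall>\<alpha>\<in>L0. \<forall>V\<in>\<alpha>. y' \<in> V \<longrightarrow> y \<in> V"
    using nc_locfin_L[OF L0A(2,1) y] by blast
  have "{z \<in> topspace (Ninf X A). piX X A z \<in> W} \<subseteq> U"
  proof
    fix z assume zW: "z \<in> {z \<in> topspace (Ninf X A). piX X A z \<in> W}"
    then have z: "z \<in> Ninf_set X A" and pzW: "piX X A z \<in> W" by (auto simp: topspace_Ninf)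
    have ca: "z L0 \<in> cplx_points (NSimp X L0)" by (rule Ninf_setD(1)[OF z L0])
    have ax: "\<forall>v. z L0 v \<noteq> 0 \<longrightarrow> y \<in> wedge X L0 v"
    proof (intro allI impI)
      fix v assume v: "z L0 v \<noteq> 0"
      have pw: "piX X A z \<in> wedge X L0 v" using piX_char[OF z] L0 v by (auto simp: wedge_pt_iff)
      have vN: "v \<in> Nverts X L0" using cplxD(3)[OF ca] v by blast
      have "y \<in> v \<alpha>" if "\<alpha> \<in> L0" for \<alpha>
      proof -
        have "v \<alpha> \<in> \<alpha>" using vN that by (auto simp: Nverts_def PiE_iff)
        moreover have "piX X A z \<in> v \<alpha>" using pw that by (simp add: wedge_iff)
        ultimately show ?thesis using W(3) pzW that by blast
      qed
      then show "y \<in> wedge X L0 v" using y by (simp add: wedge_iff)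
    qed
    obtain s where s: "s \<in> Ninf_set X A" "s L0 = z L0" "piX X A s = y"
      using section_exists[OF L0 y ca ax] by blast
    have "s \<in> ?F" using s by (simp add: topspace_Ninf)
    then obtain z' where z': "z' \<in> Zs" "s \<in> PiE (Lambda A) (Wf z')" using \<F>(3) Zs(3) by blast
    have z'F: "z' \<in> ?F" using z' Zs(1) by blast
    have "z \<in> PiE (Lambda A) (Wf z')"
    proof -
      have "z L \<in> Wf z' L" if L: "L \<in> Lambda A" for L
      proof (cases "Wf z' L = topspace (Ncplx X L)")
        case True
        then show ?thesis using Ninf_setD(1)[OF z L] by (simp add: topspace_Ncplx)
      next
        case False
        then have LL0: "L \<subseteq> L0" using z' L by (auto simp: L0_def)
        have "z L = proj_pt L (z L0)" using Ninf_setD(2)[OF z L L0 LL0] by simp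
        also have "\<dots> = proj_pt L (s L0)" using s(2) by simp
        also have "\<dots> = s L" using Ninf_setD(2)[OF s(1) L L0 LL0] by simp
        finally show ?thesis using z'(2) L by (auto simp: PiE_iff)
      qed
      then show ?thesis using Ninf_setD(3)[OF z] by (auto simp: PiE_iff)
    qed
    then have "z \<in> U'" using Wf(4)[OF z'F] by blast
    then show "z \<in> U" using U'(2) z by blast
  qed
  then show "\<exists>V. openin X V \<and> y \<in> V \<and> {x \<in> topspace (Ninf X A). piX X A x \<in> V} \<subseteq> U"
    using W(1,2) by blast
qed

lemma fiber_contractible:
  assumes x: "x \<in> topspace X"
  shows "contractible_space (subtopology (Ninf X A) {z \<in> topspace (Ninf X A). piX X A z = x})"
proof -
  let ?F = "{z \<in> topspace (Ninf X A). piX X A z = x}"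
  let ?S = "subtopology (Ninf X A) ?F"
  let ?I = "top_of_set {0..1::real}"
  let ?g = "\<lambda>p. Hmap (snd p, fst p)"
  have c1: "continuous_map (prod_topology ?I ?S) (Ninf X A) ?g"
  proof -
    have "continuous_map (prod_topology ?I ?S) (prod_topology (Ninf X A) ?I) (\<lambda>p. (snd p, fst p))"
      by (intro continuous_map_pairedI continuous_map_fst continuous_map_into_fulltopology[OF continuous_map_snd])
    from continuous_map_compose[OF this H_cont] show ?thesis by (simp add: o_def)
  qed
  have im: "?g \<in> topspace (prod_topology ?I ?S) \<rightarrow> ?F"
  proof
    fix p assume "p \<in> topspace (prod_topology ?I ?S)"
    then obtain t z where p: "p = (t, z)" "0 \<le> t" "t \<le> 1" "z \<in> Ninf_set X A" "piX X A z = x"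
      by (auto simp: topspace_Ninf)
    show "?g p \<in> ?F" using H_Ninf[OF p(4,2,3)] p by (simp add: topspace_Ninf)
  qed
  have c2: "continuous_map (prod_topology ?I ?S) ?S ?g"
    using c1 im by (simp add: continuous_map_in_subtopology)
  define h where "h = (\<lambda>p. if fst p = 0 then snd p else if fst p = 1 then p_inf X A \<phi> x else ?g p)"
  have c3: "continuous_map (prod_topology ?I ?S) ?S h"
  proof (rule continuous_map_eq[OF c2])
    fix p assume "p \<in> topspace (prod_topology ?I ?S)"
    then obtain t z where p: "p = (t, z)" "z \<in> Ninf_set X A" "piX X A z = x"
      by (auto simp: topspace_Ninf)
    show "?g p = h p" using p H_0[OF p(2)] H_1[of z] by (auto simp: h_def)
  qed
  have "homotopic_with (\<lambda>x. True) ?S ?S id (\<lambda>_. p_inf X A \<phi> x)"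
    unfolding homotopic_with_def using c3 by (intro exI[of _ h]) (auto simp: h_def)
  then show ?thesis unfolding contractible_space_def by blast
qed

end


theorem theorem2p5:
  fixes X :: "'a topology"
    and \<A> :: "'a set set set"
    and \<phi> :: "'a set set \<Rightarrow> 'a set \<Rightarrow> 'a \<Rightarrow> real"
  assumes complete: "topologically_complete X"
    and covers: "\<forall>\<alpha>\<in>\<A>. normal_cover X \<alpha> (\<phi> \<alpha>)"
    and condI: "\<forall>U x. openin X U \<and> x \<in> U \<longrightarrow> (\<exists>\<alpha>\<in>\<A>. \<Union>{V\<in>\<alpha>. x \<in> V} \<subseteq> U)"
    and condII: "\<forall>f. (\<forall>\<alpha>\<in>\<A>. f \<alpha> \<in> \<alpha>) \<and>
                    (\<forall>L. finite L \<and> L \<noteq> {} \<and> L \<subseteq> \<A> \<longrightarrow> \<Inter>(f ` L) \<noteq> {})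
                  \<longrightarrow> \<Inter>(f ` \<A>) \<noteq> {}"
  shows "(continuous_map (Ninf X \<A>) X (piX X \<A>) \<and> proper_map (Ninf X \<A>) X (piX X \<A>))
    \<and> (\<forall>x\<in>topspace X. piX X \<A> (p_inf X \<A> \<phi> x) = x)
    \<and> (\<exists>H. continuous_map (prod_topology (Ninf X \<A>) (top_of_set {0..1::real})) (Ninf X \<A>) H \<and>
             (\<forall>z\<in>topspace (Ninf X \<A>). H (z, 0) = z \<and> H (z, 1) = p_inf X \<A> \<phi> (piX X \<A> z)) \<and>
             (\<forall>z\<in>topspace (Ninf X \<A>). \<forall>t\<in>{0..1}. piX X \<A> (H (z, t)) = piX X \<A> z))
    \<and> (\<forall>x\<in>topspace X. contractible_space
           (subtopology (Ninf X \<A>) {z \<in> topspace (Ninf X \<A>). piX X \<A> z = x}))"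
proof -
  have Haus: "Hausdorff_space X"
    using complete unfolding topologically_complete_def tychonoff_space_def
    by (meson completely_regular_imp_regular_space regular_t1_imp_Hausdorff_space)
  interpret thm_setting X \<A> \<phi>
    by (rule thm_setting.intro[OF ncov.intro[OF covers] thm_setting_axioms.intro[OF Haus condI condII]])
  have P1: "continuous_map (Ninf X \<A>) X (piX X \<A>) \<and> proper_map (Ninf X \<A>) X (piX X \<A>)"
    unfolding proper_map_def using piX_cont piX_closed fiber_compact by blast
  have P2: "\<forall>x\<in>topspace X. piX X \<A> (p_inf X \<A> \<phi> x) = x" using piX_p_inf by blast
  have P3: "\<exists>H. continuous_map (prod_topology (Ninf X \<A>) (top_of_set {0..1::real})) (Ninf X \<A>) H \<and>
             (\<forall>z\<in>topspace (Ninf X \<A>). H (z, 0) = z \<and> H (z, 1) = p_inf X \<A> \<phi> (piX X \<A> z)) \<and>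
             (\<forall>z\<in>topspace (Ninf X \<A>). \<forall>t\<in>{0..1}. piX X \<A> (H (z, t)) = piX X \<A> z)"
  proof (intro exI[of _ Hmap] conjI ballI)
    show "continuous_map (prod_topology (Ninf X \<A>) (top_of_set {0..1::real})) (Ninf X \<A>) Hmap" by (rule H_cont)
    fix z assume z: "z \<in> topspace (Ninf X \<A>)"
    then have zN: "z \<in> Ninf_set X \<A>" by (simp add: topspace_Ninf)
    show "Hmap (z, 0) = z" by (rule H_0[OF zN])
    show "Hmap (z, 1) = p_inf X \<A> \<phi> (piX X \<A> z)" by (rule H_1)
    fix t :: real assume "t \<in> {0..1}"
    then show "piX X \<A> (Hmap (z, t)) = piX X \<A> z" using H_Ninf(2)[OF zN] by auto
  qed
  have P4: "\<forall>x\<in>topspace X. contractible_space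
           (subtopology (Ninf X \<A>) {z \<in> topspace (Ninf X \<A>). piX X \<A> z = x})"
    using fiber_contractible by blast
  show ?thesis using P1 P2 P3 P4 by blast
qed


end
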